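(* The rank-one operator $\Phi=1\otimes\overline{1}$ on $\mathcal{F}^2(\mathbb{C}^n)$ belongs to $\mathcal{W}^{2,1}(\mathcal{F}^2)$, and $$\Delta\Phi=\pi\sum_{\mathbf{m}\in\mathbb{N}_0^n,\ |\mathbf{m}|=1}(E_{\mathbf{m}}-\Phi).$$
   Context: $\mathcal{F}^2(\mathbb{C}^n)$ is the Fock space of entire functions square integrable with respect to $e^{-\pi|z|^2}dz$, with normalized kernels $k_z(w)=e^{\pi\bar zw-\pi|z|^2/2}$. $\Phi f=\langle f,1\rangle 1$ is the projection onto the constants. For $\mathbf{m}\in\mathbb{N}_0^n$, let $e_{\mathbf m}(z)=\sqrt{\pi^{|\mathbf m|}/\mathbf m!}\,z^{\mathbf m}$, and let $E_{\mathbf m}$ be the orthogonal projection onto $\mathrm{span}\,e_{\mathbf m}$. $B(S)(z)=\langle Sk_z,k_z\rangle$ is the Berezin transform and $\Delta=\sum_i\partial_{z_i}\partial_{\bar z_i}$. $\mathcal{S}^1(\mathcal{F}^2)$ denotes the trace class. $\mathcal{W}^{2,p}(\mathcal{F}^2)$ is the set of bounded $S$ with $\Delta B(S)=B(T)$ for some $T$ in the Schatten class $\mathcal{S}^p(\mathcal{F}^2)$. In that case $\Delta S:=T$. *)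

theory Defs
  imports "HOL-Analysis.Analysis"
begin

text \<open>Functions on C^n are modelled as complex ^ 'n => complex, 'n a finite index type.
  Lebesgue measure dz on C^n = R^(2n) is lborel on complex ^ 'n.\<close>

type_synonym 'n fun_cn = "complex ^ 'n \<Rightarrow> complex"

definition gauss_weight :: "complex ^ 'n::finite \<Rightarrow> real" where
  "gauss_weight z = exp (- pi * (norm z)\<^sup>2)"

definition entire_cn :: "'n::finite fun_cn \<Rightarrow> bool" where
  "entire_cn f \<longleftrightarrow> (\<forall>z. \<exists>D. (f has_derivative D) (at z) \<and>
       (\<forall>(c::complex) v. D (\<chi> i. c * v $ i) = c * D v))"

definition fock_space :: "'n::finite fun_cn set" where
  "fock_space = {f. entire_cn f \<and> f \<in> borel_measurable lborel \<and>
       integrable lborel (\<lambda>z. (cmod (f z))\<^sup>2 * gauss_weight z)}"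

definition fock_ip :: "'n::finite fun_cn \<Rightarrow> 'n fun_cn \<Rightarrow> complex" where
  "fock_ip f g = integral\<^sup>L lborel (\<lambda>z. f z * cnj (g z) * complex_of_real (gauss_weight z))"

definition fock_norm :: "'n::finite fun_cn \<Rightarrow> real" where
  "fock_norm f = sqrt (Re (fock_ip f f))"

text \<open>Bounded linear operators on F^2 (values outside F^2 are irrelevant).\<close>
definition fock_bounded :: "('n::finite fun_cn \<Rightarrow> 'n fun_cn) \<Rightarrow> bool" where
  "fock_bounded S \<longleftrightarrow>
     (\<forall>f\<in>fock_space. S f \<in> fock_space) \<and>
     (\<forall>f\<in>fock_space. \<forall>g\<in>fock_space. \<forall>a b::complex.
         S (\<lambda>z. a * f z + b * g z) = (\<lambda>z. a * S f z + b * S g z)) \<and>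
     (\<exists>C. \<forall>f\<in>fock_space. fock_norm (S f) \<le> C * fock_norm f)"

definition fock_opnorm :: "('n::finite fun_cn \<Rightarrow> 'n fun_cn) \<Rightarrow> real" where
  "fock_opnorm S = Sup {fock_norm (S f) | f. f \<in> fock_space \<and> fock_norm f \<le> 1}"

definition fock_rank_le :: "('n::finite fun_cn \<Rightarrow> 'n fun_cn) \<Rightarrow> nat \<Rightarrow> bool" where
  "fock_rank_le R k \<longleftrightarrow> (\<exists>g :: nat \<Rightarrow> 'n fun_cn. \<forall>f\<in>fock_space.
       \<exists>c :: nat \<Rightarrow> complex. R f = (\<lambda>z. \<Sum>j<k. c j * g j z))"

definition fock_sv :: "('n::finite fun_cn \<Rightarrow> 'n fun_cn) \<Rightarrow> nat \<Rightarrow> real" where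
  "fock_sv T k = Inf {fock_opnorm (\<lambda>f z. T f z - R f z) | R. fock_bounded R \<and> fock_rank_le R k}"

definition fock_schatten :: "real \<Rightarrow> ('n::finite fun_cn \<Rightarrow> 'n fun_cn) set" where
  "fock_schatten p = {T. fock_bounded T \<and> summable (\<lambda>k. fock_sv T k powr p)}"

definition fock_kernel :: "complex ^ 'n::finite \<Rightarrow> 'n fun_cn" where
  "fock_kernel z = (\<lambda>w. exp (of_real pi * (\<Sum>i\<in>UNIV. cnj (z $ i) * w $ i)
                               - of_real (pi * (norm z)\<^sup>2 / 2)))"

definition berezin :: "('n::finite fun_cn \<Rightarrow> 'n fun_cn) \<Rightarrow> 'n fun_cn" where
  "berezin S z = fock_ip (S (fock_kernel z)) (fock_kernel z)"

definition dd2 :: "'n::finite fun_cn \<Rightarrow> complex ^ 'n \<Rightarrow> complex ^ 'n \<Rightarrow> complex" where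
  "dd2 F z v = vector_derivative
      (\<lambda>t. vector_derivative (\<lambda>s. F (z + s *\<^sub>R v)) (at t)) (at 0)"

text \<open>Delta = sum_i d/dz_i d/dzbar_i = (1/4) sum_i (d^2/dx_i^2 + d^2/dy_i^2).\<close>
definition fock_lap :: "'n::finite fun_cn \<Rightarrow> 'n fun_cn" where
  "fock_lap F z = (1/4) * (\<Sum>i\<in>UNIV. dd2 F z (axis i 1) + dd2 F z (axis i \<i>))"

definition W2 :: "real \<Rightarrow> ('n::finite fun_cn \<Rightarrow> 'n fun_cn) set" where
  "W2 p = {S. fock_bounded S \<and> (\<exists>T. T \<in> fock_schatten p \<and> fock_lap (berezin S) = berezin T)}"

definition Phi :: "'n::finite fun_cn \<Rightarrow> 'n fun_cn" where
  "Phi f = (\<lambda>z. fock_ip f (\<lambda>_. 1))"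

definition e_mon :: "('n::finite \<Rightarrow> nat) \<Rightarrow> 'n fun_cn" where
  "e_mon m = (\<lambda>z. of_real (sqrt (pi ^ (\<Sum>i\<in>UNIV. m i) / (\<Prod>i\<in>UNIV. fact (m i))))
                  * (\<Prod>i\<in>UNIV. (z $ i) ^ m i))"

definition E_proj :: "('n::finite \<Rightarrow> nat) \<Rightarrow> 'n fun_cn \<Rightarrow> 'n fun_cn" where
  "E_proj m f = (\<lambda>z. fock_ip f (e_mon m) * e_mon m z)"

end

theory Submission
  imports Defs "HOL-Probability.Characteristic_Functions" "HOL-Real_Asymp.Real_Asymp"
begin

definition gg :: "complex \<Rightarrow> real \<Rightarrow> complex" where
  "gg c x = exp (c * of_real x - of_real (pi * x\<^sup>2))"

lemma char_std_normal_int: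
  "(\<integral>y. complex_of_real (std_normal_density y) * iexp (t * y) \<partial>lborel) = complex_of_real (exp (- (t\<^sup>2) / 2))"
proof -
  have "char std_normal_distribution t = complex_of_real (exp (- (t^2) / 2))"
    by (simp add: char_std_normal_distribution)
  moreover have "char std_normal_distribution t = (\<integral>y. complex_of_real (std_normal_density y) * iexp (t * y) \<partial>lborel)"
    unfolding char_def
    by (subst integral_density) (auto simp: scaleR_conv_of_real)
  ultimately show ?thesis by simp
qed

lemma std_normal_integrable_iexp:
  "integrable lborel (\<lambda>y. complex_of_real (std_normal_density y) * iexp (t * y))"
proof (rule Bochner_Integration.integrable_bound[where f = "std_normal_density"])
  show "integrable lborel std_normal_density" by simp
  show "(\<lambda>y. complex_of_real (std_normal_density y) * iexp (t * y)) \<in> borel_measurable lborel"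
    by measurable
  show "AE x in lborel. norm (complex_of_real (std_normal_density x) * iexp (t * x)) \<le> norm (std_normal_density x)"
    by (auto simp: norm_mult)
qed

lemma gg_affine:
  fixes c :: complex and y :: real
  defines "\<sigma> \<equiv> 1 / sqrt (2 * pi)" and "\<mu> \<equiv> Re c / (2 * pi)"
  shows "gg c (\<mu> + \<sigma> * y) = exp (c * \<mu> - pi * \<mu>\<^sup>2) *
     (complex_of_real (sqrt (2 * pi)) * (complex_of_real (std_normal_density y) * iexp (Im c * \<sigma> * y)))"
proof -
  have s2: "\<sigma>\<^sup>2 = 1 / (2 * pi)" unfolding \<sigma>_def by (simp add: power_divide)
  have "sqrt (2 * pi) * std_normal_density y = exp (- y\<^sup>2 / 2)"
    by (simp add: std_normal_density_def)
  then have e0: "complex_of_real (sqrt (2 * pi)) * complex_of_real (std_normal_density y) = complex_of_real (exp (- y\<^sup>2 / 2))"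
    by (simp only: of_real_mult[symmetric])
  have e1: "complex_of_real (exp (- y\<^sup>2 / 2)) = exp (- (of_real y)\<^sup>2 / 2)"
    by (simp add: exp_of_real[symmetric])
  note e = e0[unfolded e1]
  have ex: "c * complex_of_real (\<mu> + \<sigma> * y) - complex_of_real (pi * (\<mu> + \<sigma> * y)\<^sup>2)
      = (c * \<mu> - pi * \<mu>\<^sup>2) + (- (of_real y)\<^sup>2 / 2) + \<i> * complex_of_real (Im c * \<sigma> * y)"
  proof -
    obtain p q where c: "c = Complex p q" by (cases c)
    have m: "2 * pi * \<mu> = p" unfolding \<mu>_def c by simp
    have sg: "pi * \<sigma>\<^sup>2 = 1/2" using s2 by simp
    have "pi * (\<mu> + \<sigma> * y)\<^sup>2 = pi * \<mu>\<^sup>2 + (2 * pi * \<mu>) * \<sigma> * y + (pi * \<sigma>\<^sup>2) * y\<^sup>2"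
      by (simp add: power2_eq_square algebra_simps)
    also have "\<dots> = pi * \<mu>\<^sup>2 + p * \<sigma> * y + y\<^sup>2 / 2" using m sg by simp
    finally have r: "pi * (\<mu> + \<sigma> * y)\<^sup>2 = pi * \<mu>\<^sup>2 + p * \<sigma> * y + y\<^sup>2 / 2" .
    have re: "Re (complex_of_real y ^ 2) = y\<^sup>2" "Im (complex_of_real y ^ 2) = 0"
      by (simp_all only: of_real_power[symmetric] Re_complex_of_real Im_complex_of_real)
    show ?thesis
    apply (rule complex_eqI)
    subgoal using r by (simp add: c re algebra_simps)
    subgoal by (simp add: c re algebra_simps)
    done
  qed
  show ?thesis
    unfolding gg_def ex exp_add e[symmetric] by (simp add: mult_ac)
qed

lemma gg_hbi: "has_bochner_integral lborel (gg c) (exp (c\<^sup>2 / (4 * pi)))"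
proof -
  define \<sigma> where "\<sigma> = 1 / sqrt (2 * pi)"
  define \<mu> where "\<mu> = Re c / (2 * pi)"
  define A where "A = exp (c * \<mu> - pi * \<mu>\<^sup>2)"
  have sp: "\<sigma> > 0" unfolding \<sigma>_def by simp
  have s2: "\<sigma>\<^sup>2 = 1 / (2 * pi)" unfolding \<sigma>_def by (simp add: power_divide)
  have h: "gg c (\<mu> + \<sigma> * y) = A * (complex_of_real (sqrt (2 * pi)) *
      (complex_of_real (std_normal_density y) * iexp (Im c * \<sigma> * y)))" for y
    unfolding A_def \<sigma>_def \<mu>_def by (rule gg_affine)
  have ih: "integrable lborel (\<lambda>y. gg c (\<mu> + \<sigma> * y))"
    unfolding h by (intro integrable_mult_right std_normal_integrable_iexp)
  have int: "integrable lborel (gg c)"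
    using ih lborel_integrable_real_affine_iff[of \<sigma> "gg c" \<mu>] sp by simp
  have "integral\<^sup>L lborel (gg c) = \<bar>\<sigma>\<bar> *\<^sub>R integral\<^sup>L lborel (\<lambda>y. gg c (\<mu> + \<sigma> * y))"
    using sp by (intro lborel_integral_real_affine) simp
  also have "\<dots> = complex_of_real \<sigma> * (A * (complex_of_real (sqrt (2 * pi)) *
       complex_of_real (exp (- ((Im c * \<sigma>)\<^sup>2) / 2))))"
    using sp unfolding h integral_mult_right_zero char_std_normal_int by (simp add: scaleR_conv_of_real)
  also have "\<dots> = A * exp (- (of_real (Im c * \<sigma>))\<^sup>2 / 2)"
  proof -
    have "\<sigma> * sqrt (2 * pi) = 1" unfolding \<sigma>_def by simp
    then have "complex_of_real \<sigma> * complex_of_real (sqrt (2 * pi)) = 1"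
      by (metis of_real_1 of_real_mult)
    then show ?thesis
      by (simp add: exp_of_real[symmetric] mult_ac)
  qed
  also have "\<dots> = exp (c\<^sup>2 / (4 * pi))"
  proof -
    obtain p q where c: "c = Complex p q" by (cases c)
    have e: "c * \<mu> - pi * \<mu>\<^sup>2 + (- (of_real (Im c * \<sigma>))\<^sup>2 / 2) = c\<^sup>2 / (4 * pi)"
      apply (rule complex_eqI)
      using s2 by (simp_all add: c \<mu>_def power2_eq_square field_simps)
    show ?thesis unfolding A_def e[symmetric] exp_add by simp
  qed
  finally show ?thesis using int by (simp add: has_bochner_integral_iff)
qed

lemma FTC_R:
  fixes F f :: "real \<Rightarrow> complex"
  assumes d: "\<And>x. (F has_vector_derivative f x) (at x)"
    and c: "continuous_on UNIV f" and i: "integrable lborel f"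
    and t: "(F \<longlongrightarrow> 0) at_top" and b: "(F \<longlongrightarrow> 0) at_bot"
  shows "integral\<^sup>L lborel f = 0"
proof -
  have fm: "f \<in> borel_measurable lborel" using i by auto
  have lim1: "((\<lambda>T. integral\<^sup>L lborel (\<lambda>x. indicator {-T..T} x *\<^sub>R f x)) \<longlongrightarrow> integral\<^sup>L lborel f) at_top"
  proof (rule integral_dominated_convergence_at_top[where w="\<lambda>x. norm (f x)"])
    show "f \<in> borel_measurable lborel" by fact
    show "(\<lambda>x. indicator {-T..T} x *\<^sub>R f x) \<in> borel_measurable lborel" for T using fm by measurable
    show "integrable lborel (\<lambda>x. norm (f x))" using i by auto
    show "AE x in lborel. ((\<lambda>T. indicator {-T..T} x *\<^sub>R f x) \<longlongrightarrow> f x) at_top"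
    proof (rule AE_I2)
      fix x :: real
      have "\<forall>\<^sub>F T in at_top. indicator {-T..T} x *\<^sub>R f x = f x"
        using eventually_ge_at_top[of "\<bar>x\<bar>"] by eventually_elim (auto simp: indicator_def)
      then show "((\<lambda>T. indicator {-T..T} x *\<^sub>R f x) \<longlongrightarrow> f x) at_top"
        by (rule tendsto_eventually)
    qed
    show "\<forall>\<^sub>F T in at_top. AE x in lborel. norm (indicator {-T..T} x *\<^sub>R f x) \<le> norm (f x)"
      by (intro always_eventually allI AE_I2) (simp add: indicator_def)
  qed
  have eq: "\<forall>\<^sub>F T in at_top. integral\<^sup>L lborel (\<lambda>x. indicator {-T..T} x *\<^sub>R f x) = F T - F (-T)"
    using eventually_ge_at_top[of "0::real"]
  proof eventually_elim
    case (elim T)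
    show ?case
    proof (rule integral_FTC_atLeastAtMost)
      show "- T \<le> T" using elim by simp
      show "(F has_vector_derivative f x) (at x within {- T..T})" for x
        using d by (rule has_vector_derivative_at_within)
      show "continuous_on {- T..T} f" using c by (rule continuous_on_subset) simp
    qed
  qed
  have lim2: "((\<lambda>T. F T - F (-T)) \<longlongrightarrow> 0 - 0) at_top"
    by (intro tendsto_diff t filterlim_compose[OF b] filterlim_uminus_at_bot_at_top)
  have "((\<lambda>T. integral\<^sup>L lborel (\<lambda>x. indicator {-T..T} x *\<^sub>R f x)) \<longlongrightarrow> 0) at_top"
    using lim2 eq by (simp add: tendsto_cong)
  from tendsto_unique[OF trivial_limit_at_top_linorder lim1 this] show ?thesis .
qed

lemma norm_gg: "norm (gg c x) = exp (Re c * x - pi * x\<^sup>2)"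
  unfolding gg_def norm_exp_eq_Re by simp

lemma exp_quad_nd: "exp (p * x - pi * x\<^sup>2) = exp (p\<^sup>2 / (4 * pi)) * normal_density (p / (2 * pi)) (1 / sqrt (2 * pi)) x"
proof -
  have "exp (p\<^sup>2 / (4 * pi)) * normal_density (p / (2 * pi)) (1 / sqrt (2 * pi)) x
     = exp (p\<^sup>2 / (4 * pi)) * exp (- (x - p / (2 * pi))\<^sup>2 * pi)"
    by (simp add: normal_density_def power_divide field_simps)
  also have "\<dots> = exp (p\<^sup>2 / (4 * pi) + (- (x - p / (2 * pi))\<^sup>2 * pi))" by (simp only: exp_add)
  also have "p\<^sup>2 / (4 * pi) + (- (x - p / (2 * pi))\<^sup>2 * pi) = p * x - pi * x\<^sup>2"
    by (simp add: power2_eq_square field_simps)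
  finally show ?thesis by simp
qed

lemma integrable_exp_quad: "integrable lborel (\<lambda>x. exp (p * x - pi * x\<^sup>2))"
  unfolding exp_quad_nd by (intro integrable_mult_right integrable_normal_density) simp

lemma integrable_exp_quad_x: "integrable lborel (\<lambda>x. exp (p * x - pi * x\<^sup>2) * x)"
  unfolding exp_quad_nd mult.assoc by (intro integrable_mult_right integrable_normal_moment_nz_1) simp

lemma integrable_exp_quad_x2: "integrable lborel (\<lambda>x. exp (- pi * x\<^sup>2) * x ^ 2)"
proof -
  have "integrable lborel (\<lambda>x. normal_density 0 (1 / sqrt (2 * pi)) x * (x - 0) ^ 2)"
    by (rule integrable_normal_moment) simp
  then show ?thesis using exp_quad_nd[of 0] by simp
qed

lemma gg_integrable: "integrable lborel (gg c)"
  by (rule integrable.intros[OF gg_hbi])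

lemma ggx_integrable: "integrable lborel (\<lambda>x. complex_of_real x * gg c x)"
proof (rule Bochner_Integration.integrable_bound[OF integrable_exp_quad_x[of "Re c"]])
  show "(\<lambda>x. complex_of_real x * gg c x) \<in> borel_measurable lborel"
    unfolding gg_def by measurable
  show "AE x in lborel. norm (complex_of_real x * gg c x) \<le> norm (exp (Re c * x - pi * x\<^sup>2) * x)"
    by (auto simp: norm_mult norm_gg abs_mult)
qed

lemma gg_deriv: "(gg c has_vector_derivative ((c - of_real (2 * pi * x)) * gg c x)) (at x)"
proof -
  define h where "h z = exp (c * z - of_real pi * z\<^sup>2)" for z
  have e: "gg c = (\<lambda>x. h (of_real x))" unfolding h_def gg_def by (auto simp: fun_eq_iff)
  have "(h has_field_derivative ((c - of_real (2 * pi * x)) * h (of_real x))) (at (of_real x))"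
    unfolding h_def by (auto intro!: derivative_eq_intros simp: algebra_simps)
  then show ?thesis unfolding e by (rule has_vector_derivative_real_field)
qed

lemma gg_lim_top: "(gg c \<longlongrightarrow> 0) at_top"
proof -
  have "((\<lambda>x. exp (Re c * x - pi * x\<^sup>2)) \<longlongrightarrow> 0) at_top" by real_asymp
  then show ?thesis by (subst tendsto_norm_zero_iff[symmetric]) (simp add: norm_gg)
qed

lemma gg_lim_bot: "(gg c \<longlongrightarrow> 0) at_bot"
proof -
  have "((\<lambda>x. exp (Re c * x - pi * x\<^sup>2)) \<longlongrightarrow> 0) at_bot" by real_asymp
  then show ?thesis by (subst tendsto_norm_zero_iff[symmetric]) (simp add: norm_gg)
qed

lemma ggx_hbi: "has_bochner_integral lborel (\<lambda>x. complex_of_real x * gg c x) (c / (2 * pi) * exp (c\<^sup>2 / (4 * pi)))"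
proof -
  have fe: "(\<lambda>x. (c - of_real (2 * pi * x)) * gg c x) = (\<lambda>x. c * gg c x - of_real (2 * pi) * (of_real x * gg c x))"
    by (auto simp: fun_eq_iff algebra_simps)
  have i1: "integrable lborel (\<lambda>x. (c - of_real (2 * pi * x)) * gg c x)"
    unfolding fe by (intro Bochner_Integration.integrable_diff integrable_mult_right gg_integrable ggx_integrable)
  have cont: "continuous_on UNIV (\<lambda>x. (c - of_real (2 * pi * x)) * gg c x)"
    unfolding gg_def by (intro continuous_intros)
  have "integral\<^sup>L lborel (\<lambda>x. (c - of_real (2 * pi * x)) * gg c x) = 0"
    by (rule FTC_R[OF gg_deriv cont i1 gg_lim_top gg_lim_bot])
  moreover have "integral\<^sup>L lborel (\<lambda>x. (c - of_real (2 * pi * x)) * gg c x)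
      = c * integral\<^sup>L lborel (gg c) - 2 * pi * integral\<^sup>L lborel (\<lambda>x. complex_of_real x * gg c x)"
    unfolding fe using gg_integrable[of c] ggx_integrable[of c] by simp
  ultimately have "integral\<^sup>L lborel (\<lambda>x. complex_of_real x * gg c x) = c / (2 * pi) * integral\<^sup>L lborel (gg c)"
    by (simp add: field_simps)
  then show ?thesis using ggx_integrable[of c] gg_hbi[of c]
    by (simp add: has_bochner_integral_iff)
qed

lemma Basis_vec_image: "(Basis :: (complex^'n::finite) set) = (\<lambda>(i, u). axis i u) ` (UNIV \<times> Basis)"
  unfolding Basis_vec_def by auto

lemma inj_axis_pairs: "inj_on (\<lambda>(i, u). axis i u :: complex^'n::finite) (UNIV \<times> Basis)"
  by (auto simp: inj_on_def axis_eq_axis)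

lemma sum_Basis_vec:
  fixes f :: "complex^'n::finite \<Rightarrow> 'a::comm_monoid_add"
  shows "(\<Sum>b\<in>Basis. f b) = (\<Sum>i\<in>UNIV. f (axis i 1) + f (axis i \<i>))"
proof -
  have "(\<Sum>b\<in>Basis. f b) = (\<Sum>p\<in>UNIV \<times> Basis. f ((\<lambda>(i, u). axis i u) p))"
    unfolding Basis_vec_image by (simp add: sum.reindex[OF inj_axis_pairs] comp_def)
  also have "\<dots> = (\<Sum>i\<in>UNIV. \<Sum>u\<in>Basis. f (axis i u))"
    by (simp add: sum.cartesian_product case_prod_unfold)
  also have "\<dots> = (\<Sum>i\<in>UNIV. f (axis i 1) + f (axis i \<i>))"
    by (simp add: Basis_complex_def)
  finally show ?thesis .
qed

lemma vec_comp_repr: "(w::complex^'n::finite) $ j = (\<Sum>b\<in>Basis. complex_of_real (w \<bullet> b) * b $ j)"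
proof -
  have "w $ j = (\<Sum>b\<in>Basis. (w \<bullet> b) *\<^sub>R b) $ j" by (simp add: euclidean_representation)
  also have "\<dots> = (\<Sum>b\<in>Basis. complex_of_real (w \<bullet> b) * b $ j)"
    unfolding sum_component vector_scaleR_component by (simp only: scaleR_conv_of_real)
  finally show ?thesis .
qed

lemma norm2_Basis: "(norm (w::'b::euclidean_space))\<^sup>2 = (\<Sum>b\<in>Basis. (w \<bullet> b)\<^sup>2)"
  by (subst power2_norm_eq_inner, subst euclidean_inner) (simp add: power2_eq_square)

lemma norm2_vec: "(norm (w::complex^'n::finite))\<^sup>2 = (\<Sum>i\<in>UNIV. (cmod (w $ i))\<^sup>2)"
  by (simp add: norm_vec_def L2_set_def sum_nonneg)

lemma prod_gg:
  fixes a :: "'b::euclidean_space \<Rightarrow> complex"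
  shows "(\<Prod>b\<in>Basis. gg (a b) (w \<bullet> b)) = exp ((\<Sum>b\<in>Basis. a b * of_real (w \<bullet> b)) - of_real (pi * (norm w)\<^sup>2))"
proof -
  have "(\<Prod>b\<in>Basis. gg (a b) (w \<bullet> b)) = exp (\<Sum>b\<in>Basis. a b * of_real (w \<bullet> b) - of_real (pi * (w \<bullet> b)\<^sup>2))"
    unfolding gg_def by (simp add: exp_sum)
  also have "(\<Sum>b\<in>Basis. a b * of_real (w \<bullet> b) - of_real (pi * (w \<bullet> b)\<^sup>2)) =
      (\<Sum>b\<in>Basis. a b * of_real (w \<bullet> b)) - of_real (pi * (norm w)\<^sup>2)"
    by (simp add: sum_subtractf norm2_Basis sum_distrib_left)
  finally show ?thesis .
qed

lemma lborel_prod_hbi: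
  fixes h :: "'b::euclidean_space \<Rightarrow> real \<Rightarrow> 'c::{real_normed_field, banach, second_countable_topology}"
  assumes hi: "\<And>b. b \<in> Basis \<Longrightarrow> integrable lborel (h b)"
  shows "has_bochner_integral lborel (\<lambda>w::'b. \<Prod>b\<in>Basis. h b (w \<bullet> b)) (\<Prod>b\<in>Basis. integral\<^sup>L lborel (h b))"
proof -
  interpret P: product_sigma_finite "\<lambda>_::'b. lborel :: real measure"
    unfolding product_sigma_finite_def using sigma_finite_lborel by simp
  define M where "M = (\<Pi>\<^sub>M b\<in>(Basis::'b set). (lborel :: real measure))"
  define g where "g = (\<lambda>f. \<Sum>b\<in>(Basis::'b set). f b *\<^sub>R b)"
  have gm: "g \<in> measurable M borel" unfolding M_def g_def by measurable
  have hm: "h b \<in> borel_measurable borel" if "b \<in> Basis" for b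
    using hi[OF that] by auto
  have Fm: "(\<lambda>w::'b. \<Prod>b\<in>Basis. h b (w \<bullet> b)) \<in> borel_measurable borel"
    by (intro borel_measurable_prod measurable_compose[OF _ hm]) auto
  have gc: "g x \<bullet> b = x b" if "b \<in> Basis" for x and b :: 'b
    using that unfolding g_def by (simp add: inner_sum_left inner_Basis if_distrib sum.delta cong: if_cong)
  have eqF: "(\<Prod>b\<in>Basis. h b (g x \<bullet> b)) = (\<Prod>b\<in>Basis. h b (x b))" for x
    by (intro prod.cong refl) (simp add: gc)
  have L: "lborel = distr M borel g" unfolding M_def g_def by (rule lborel_eq)
  have int: "integrable M (\<lambda>x. \<Prod>b\<in>Basis. h b (x b))"
    unfolding M_def by (intro P.product_integrable_prod hi) auto
  have val: "integral\<^sup>L M (\<lambda>x. \<Prod>b\<in>Basis. h b (x b)) = (\<Prod>b\<in>Basis. integral\<^sup>L lborel (h b))"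
    unfolding M_def by (intro P.product_integral_prod hi) auto
  show ?thesis
    unfolding has_bochner_integral_iff
    apply (subst (1 2) L)
    using int val
    by (simp add: integrable_distr_eq[OF gm Fm] integral_distr[OF gm Fm] eqF)
qed

lemma hb_gauss0:
  fixes a :: "'b::euclidean_space \<Rightarrow> complex"
  shows "has_bochner_integral lborel (\<lambda>w. \<Prod>b\<in>Basis. gg (a b) (w \<bullet> b)) (exp (\<Sum>b\<in>Basis. (a b)\<^sup>2 / (4 * pi)))"
proof -
  have "has_bochner_integral lborel (\<lambda>w. \<Prod>b\<in>Basis. gg (a b) (w \<bullet> b)) (\<Prod>b\<in>Basis. integral\<^sup>L lborel (gg (a b)))"
    by (rule lborel_prod_hbi) (rule gg_integrable)
  also have "(\<Prod>b\<in>Basis. integral\<^sup>L lborel (gg (a b))) = (\<Prod>b\<in>(Basis::'b set). exp ((a b)\<^sup>2 / (4 * pi)))"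
    by (intro prod.cong refl has_bochner_integral_integral_eq gg_hbi)
  finally show ?thesis by (simp add: exp_sum)
qed

lemma hb_gauss1:
  fixes a :: "'b::euclidean_space \<Rightarrow> complex"
  assumes b0: "b0 \<in> Basis"
  shows "has_bochner_integral lborel (\<lambda>w. complex_of_real (w \<bullet> b0) * (\<Prod>b\<in>Basis. gg (a b) (w \<bullet> b)))
           (a b0 / (2 * pi) * exp (\<Sum>b\<in>Basis. (a b)\<^sup>2 / (4 * pi)))"
proof -
  define h where "h b x = (if b = b0 then complex_of_real x else 1) * gg (a b) x" for b x
  have hi: "integrable lborel (h b)" for b
    unfolding h_def by (cases "b = b0") (simp_all add: gg_integrable ggx_integrable)
  have hv: "integral\<^sup>L lborel (h b) = (if b = b0 then a b0 / (2 * pi) else 1) * exp ((a b)\<^sup>2 / (4 * pi))" for b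
    unfolding h_def by (cases "b = b0") (simp_all add: has_bochner_integral_integral_eq[OF gg_hbi] has_bochner_integral_integral_eq[OF ggx_hbi])
  have "has_bochner_integral lborel (\<lambda>w. \<Prod>b\<in>Basis. h b (w \<bullet> b)) (\<Prod>b\<in>Basis. integral\<^sup>L lborel (h b))"
    by (rule lborel_prod_hbi) (rule hi)
  moreover have "(\<lambda>w. \<Prod>b\<in>Basis. h b (w \<bullet> b)) = (\<lambda>w. complex_of_real (w \<bullet> b0) * (\<Prod>b\<in>Basis. gg (a b) (w \<bullet> b)))"
    unfolding h_def prod.distrib using b0 by (simp add: prod.delta[OF finite_Basis] if_distrib cong: if_cong)
  moreover have "(\<Prod>b\<in>Basis. integral\<^sup>L lborel (h b)) = a b0 / (2 * pi) * exp (\<Sum>b\<in>Basis. (a b)\<^sup>2 / (4 * pi))"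
    unfolding hv prod.distrib using b0 by (simp add: prod.delta[OF finite_Basis] exp_sum)
  ultimately show ?thesis by simp
qed

lemma hb_gauss_lin:
  fixes a \<beta> :: "'b::euclidean_space \<Rightarrow> complex"
  shows "has_bochner_integral lborel (\<lambda>w. (\<Sum>b0\<in>Basis. \<beta> b0 * complex_of_real (w \<bullet> b0)) * (\<Prod>b\<in>Basis. gg (a b) (w \<bullet> b)))
           ((\<Sum>b0\<in>Basis. \<beta> b0 * a b0) / (2 * pi) * exp (\<Sum>b\<in>Basis. (a b)\<^sup>2 / (4 * pi)))"
proof -
  have "has_bochner_integral lborel (\<lambda>w. \<Sum>b0\<in>Basis. \<beta> b0 * (complex_of_real (w \<bullet> b0) * (\<Prod>b\<in>Basis. gg (a b) (w \<bullet> b))))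
           (\<Sum>b0\<in>Basis. \<beta> b0 * (a b0 / (2 * pi) * exp (\<Sum>b\<in>Basis. (a b)\<^sup>2 / (4 * pi))))"
    by (intro has_bochner_integral_sum has_bochner_integral_mult_right hb_gauss1)
  moreover have "(\<lambda>w. \<Sum>b0\<in>Basis. \<beta> b0 * (complex_of_real (w \<bullet> b0) * (\<Prod>b\<in>Basis. gg (a b) (w \<bullet> b))))
     = (\<lambda>w. (\<Sum>b0\<in>Basis. \<beta> b0 * complex_of_real (w \<bullet> b0)) * (\<Prod>b\<in>Basis. gg (a b) (w \<bullet> b)))"
    by (simp add: fun_eq_iff sum_distrib_left sum_distrib_right mult_ac)
  moreover have "(\<Sum>b0\<in>Basis. \<beta> b0 * (a b0 / (2 * pi) * exp (\<Sum>b\<in>Basis. (a b)\<^sup>2 / (4 * pi))))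
     = (\<Sum>b0\<in>Basis. \<beta> b0 * a b0) / (2 * pi) * exp (\<Sum>b\<in>(Basis::'b set). (a b)\<^sup>2 / (4 * pi))"
    by (simp add: sum_distrib_right sum_divide_distrib mult_ac)
  ultimately show ?thesis by simp
qed

definition ak :: "complex^'n::finite \<Rightarrow> complex^'n \<Rightarrow> complex" where
  "ak z b = of_real pi * (\<Sum>i\<in>UNIV. z $ i * cnj (b $ i))"

definition Kz :: "complex^'n::finite \<Rightarrow> complex" where
  "Kz z = complex_of_real (exp (- (pi * (norm z)\<^sup>2 / 2)))"

lemma axis_nth_eq: "axis i u $ k = (if k = i then u else 0)"
  by (simp add: axis_def)

lemma ak_axis: "ak z (axis i u) = of_real pi * z $ i * cnj u"
  unfolding ak_def by (simp add: axis_nth_eq if_distrib sum.delta cong: if_cong)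

lemma sum_ak_sq: "(\<Sum>b\<in>Basis. (ak z b)\<^sup>2 / (4 * pi)) = 0"
  unfolding sum_Basis_vec ak_axis by (simp add: power2_eq_square field_simps)

lemma sum_beta_ak: "(\<Sum>b\<in>Basis. b $ j * ak z b) = 2 * of_real pi * z $ j"
proof -
  have "(\<Sum>b\<in>Basis. b $ j * ak z b) = (\<Sum>i\<in>UNIV. if j = i then 2 * of_real pi * z $ i else 0)"
    unfolding sum_Basis_vec ak_axis axis_nth_eq
    by (intro sum.cong refl) (auto simp: algebra_simps)
  also have "\<dots> = 2 * of_real pi * z $ j" by (simp add: sum.delta)
  finally show ?thesis .
qed

lemma cnj_sum_lin: "(\<Sum>i\<in>UNIV. z $ i * cnj ((w::complex^'n::finite) $ i)) = (\<Sum>b\<in>Basis. (\<Sum>i\<in>UNIV. z $ i * cnj (b $ i)) * complex_of_real (w \<bullet> b))"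
proof -
  have "(\<Sum>i\<in>UNIV. z $ i * cnj (w $ i)) = (\<Sum>i\<in>UNIV. \<Sum>b\<in>Basis. z $ i * cnj (b $ i) * complex_of_real (w \<bullet> b))"
    by (subst vec_comp_repr) (simp add: cnj_sum sum_distrib_left mult_ac)
  also have "\<dots> = (\<Sum>b\<in>Basis. (\<Sum>i\<in>UNIV. z $ i * cnj (b $ i)) * complex_of_real (w \<bullet> b))"
    by (subst sum.swap) (simp add: sum_distrib_right)
  finally show ?thesis .
qed

lemma cnjk_gw: "cnj (fock_kernel z w) * complex_of_real (gauss_weight w) = Kz z * (\<Prod>b\<in>Basis. gg (ak z b) (w \<bullet> b))"
proof -
  have A: "of_real pi * (\<Sum>i\<in>UNIV. z $ i * cnj (w $ i)) = (\<Sum>b\<in>Basis. ak z b * complex_of_real (w \<bullet> b))"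
    unfolding cnj_sum_lin[of z w] ak_def by (simp add: sum_distrib_left mult_ac)
  have "cnj (fock_kernel z w) = exp (of_real pi * (\<Sum>i\<in>UNIV. z $ i * cnj (w $ i)) - of_real (pi * (norm z)\<^sup>2 / 2))"
    unfolding fock_kernel_def exp_cnj by (simp add: cnj_sum)
  moreover have "complex_of_real (gauss_weight w) = exp (- of_real (pi * (norm w)\<^sup>2))"
    by (subst of_real_minus[symmetric], subst exp_of_real) (simp add: gauss_weight_def)
  moreover have "Kz z = exp (- of_real (pi * (norm z)\<^sup>2 / 2))"
    by (subst of_real_minus[symmetric], subst exp_of_real) (simp add: Kz_def)
  moreover have "exp (X - B) * exp (- W) = exp (- B) * exp (Y - W)" if "X = Y" for X Y B W :: complex
  proof -
    have "exp (X - B) * exp (- W) = exp ((X - B) + (- W))" by (rule exp_add[symmetric])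
    also have "(X - B) + (- W) = (- B) + (Y - W)" using that by simp
    also have "exp \<dots> = exp (- B) * exp (Y - W)" by (rule exp_add)
    finally show ?thesis .
  qed
  ultimately show ?thesis
    unfolding prod_gg using A by simp
qed

lemma hb_k: "has_bochner_integral lborel (\<lambda>w. cnj (fock_kernel z w) * complex_of_real (gauss_weight w)) (Kz z)"
proof -
  have "has_bochner_integral lborel (\<lambda>w. Kz z * (\<Prod>b\<in>Basis. gg (ak z b) (w \<bullet> b))) (Kz z * exp (\<Sum>b\<in>Basis. (ak z b)\<^sup>2 / (4 * pi)))"
    by (intro has_bochner_integral_mult_right hb_gauss0)
  then show ?thesis unfolding cnjk_gw sum_ak_sq by simp
qed

lemma hb_kx: "has_bochner_integral lborel (\<lambda>w. w $ j * (cnj (fock_kernel z w) * complex_of_real (gauss_weight w))) (z $ j * Kz z)"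
proof -
  have "has_bochner_integral lborel (\<lambda>w. Kz z * ((\<Sum>b0\<in>Basis. b0 $ j * complex_of_real (w \<bullet> b0)) * (\<Prod>b\<in>Basis. gg (ak z b) (w \<bullet> b))))
     (Kz z * ((\<Sum>b0\<in>Basis. b0 $ j * ak z b0) / (2 * pi) * exp (\<Sum>b\<in>Basis. (ak z b)\<^sup>2 / (4 * pi))))"
    by (intro has_bochner_integral_mult_right hb_gauss_lin)
  moreover have "(\<lambda>w. Kz z * ((\<Sum>b0\<in>Basis. b0 $ j * complex_of_real (w \<bullet> b0)) * (\<Prod>b\<in>Basis. gg (ak z b) (w \<bullet> b))))
      = (\<lambda>w. w $ j * (cnj (fock_kernel z w) * complex_of_real (gauss_weight w)))"
    unfolding cnjk_gw by (subst (2) vec_comp_repr) (simp add: fun_eq_iff mult_ac)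
  moreover have "Kz z * ((\<Sum>b0\<in>Basis. b0 $ j * ak z b0) / (2 * pi) * exp (\<Sum>b\<in>Basis. (ak z b)\<^sup>2 / (4 * pi))) = z $ j * Kz z"
    unfolding sum_ak_sq sum_beta_ak by simp
  ultimately show ?thesis by simp
qed

definition dlt :: "'n \<Rightarrow> 'n \<Rightarrow> nat" where "dlt j = (\<lambda>i. if i = j then 1 else 0)"

lemma inj_dlt: "inj dlt"
  by (auto simp: inj_def dlt_def fun_eq_iff split: if_splits)

lemma unit_mi: "{m :: 'n::finite \<Rightarrow> nat. (\<Sum>i\<in>UNIV. m i) = 1} = range dlt"
proof (intro equalityI subsetI)
  fix m :: "'n \<Rightarrow> nat" assume "m \<in> {m. (\<Sum>i\<in>UNIV. m i) = 1}"
  then have "sum m UNIV = Suc 0" by simp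
  then obtain a where "m a = Suc 0" "\<forall>b. a \<noteq> b \<longrightarrow> m b = 0"
    by (auto simp: sum_eq_Suc0_iff)
  then have "m = dlt a" by (auto simp: dlt_def fun_eq_iff)
  then show "m \<in> range dlt" by simp
next
  fix m :: "'n \<Rightarrow> nat" assume "m \<in> range dlt"
  then show "m \<in> {m. (\<Sum>i\<in>UNIV. m i) = 1}" by (auto simp: dlt_def sum.delta)
qed

lemma e_mon_dlt:
  fixes j :: "'n::finite"
  shows "e_mon (dlt j) = (\<lambda>z. complex_of_real (sqrt pi) * z $ j)"
proof -
  have "(\<Prod>i\<in>UNIV. fact (dlt j i) :: real) = 1"
    by (intro prod.neutral) (simp add: dlt_def)
  moreover have "(\<Sum>i\<in>UNIV. dlt j i) = 1" by (simp add: dlt_def sum.delta)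
  moreover have "(\<Prod>i\<in>UNIV. z $ i ^ dlt j i) = z $ j" for z :: "complex^'n"
    by (simp add: dlt_def if_distrib prod.delta cong: if_cong)
  ultimately show ?thesis by (simp add: e_mon_def fun_eq_iff)
qed

lemma hb_1k: "has_bochner_integral lborel (\<lambda>w. c * cnj (fock_kernel z w) * complex_of_real (gauss_weight w)) (c * Kz z)"
  using has_bochner_integral_mult_right[OF hb_k, of c] by (simp add: mult.assoc)

lemma hb_ek: "has_bochner_integral lborel (\<lambda>w. e_mon (dlt j) w * cnj (fock_kernel z w) * complex_of_real (gauss_weight w))
   (complex_of_real (sqrt pi) * z $ j * Kz z)"
  using has_bochner_integral_mult_right[OF hb_kx, of "complex_of_real (sqrt pi)" j z]
  by (simp add: e_mon_dlt mult.assoc)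

lemma cnj_Kz[simp]: "cnj (Kz z) = Kz z"
  by (simp add: Kz_def)

lemma Kz_sq: "Kz z * Kz z = complex_of_real (exp (- pi * (norm z)\<^sup>2))"
  unfolding Kz_def of_real_mult[symmetric] exp_add[symmetric] by simp

lemma ip_1k: "fock_ip (\<lambda>_. c) (fock_kernel z) = c * Kz z"
  unfolding fock_ip_def by (rule has_bochner_integral_integral_eq[OF hb_1k])

lemma ip_k1: "fock_ip (fock_kernel z) (\<lambda>_. 1) = Kz z"
proof -
  have "has_bochner_integral lborel (\<lambda>w. cnj (1 * cnj (fock_kernel z w) * complex_of_real (gauss_weight w))) (cnj (1 * Kz z))"
    by (intro has_bochner_integral_cnj hb_1k)
  then show ?thesis unfolding fock_ip_def by (simp add: has_bochner_integral_integral_eq)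
qed

lemma ip_ek: "fock_ip (e_mon (dlt j)) (fock_kernel z) = complex_of_real (sqrt pi) * z $ j * Kz z"
  unfolding fock_ip_def by (rule has_bochner_integral_integral_eq[OF hb_ek])

lemma ip_ke: "fock_ip (fock_kernel z) (e_mon (dlt j)) = complex_of_real (sqrt pi) * cnj (z $ j) * Kz z"
proof -
  have "has_bochner_integral lborel (\<lambda>w. cnj (e_mon (dlt j) w * cnj (fock_kernel z w) * complex_of_real (gauss_weight w)))
      (cnj (complex_of_real (sqrt pi) * z $ j * Kz z))"
    by (intro has_bochner_integral_cnj hb_ek)
  then show ?thesis unfolding fock_ip_def by (simp add: has_bochner_integral_integral_eq mult_ac)
qed

lemma berezin_Phi: "berezin Phi z = complex_of_real (exp (- pi * (norm z)\<^sup>2))"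
proof -
  have "Phi (fock_kernel z) = (\<lambda>_. Kz z)" unfolding Phi_def ip_k1 ..
  then show ?thesis unfolding berezin_def by (simp add: ip_1k Kz_sq)
qed

lemma sum_unit_mi: "(\<Sum>m\<in>{m :: 'n::finite \<Rightarrow> nat. (\<Sum>i\<in>UNIV. m i) = 1}. F m) = (\<Sum>j\<in>UNIV. F (dlt j))"
  unfolding unit_mi by (simp add: sum.reindex[OF inj_dlt])

lemma summand_val:
  "complex_of_real (sqrt pi) * cnj (z $ j) * Kz z * (complex_of_real (sqrt pi) * z $ j * Kz z) - Kz z * Kz z
   = complex_of_real ((pi * (cmod (z $ j))\<^sup>2 - 1) * exp (- pi * (norm z)\<^sup>2))"
proof -
  have sq: "complex_of_real (sqrt pi) * complex_of_real (sqrt pi) = complex_of_real pi"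
    by (simp flip: of_real_mult)
  have "complex_of_real (sqrt pi) * cnj (z $ j) * Kz z * (complex_of_real (sqrt pi) * z $ j * Kz z)
      = (complex_of_real (sqrt pi) * complex_of_real (sqrt pi)) * (z $ j * cnj (z $ j)) * (Kz z * Kz z)"
    by (simp only: mult_ac)
  also have "\<dots> = complex_of_real (pi * (cmod (z $ j))\<^sup>2 * exp (- pi * (norm z)\<^sup>2))"
    unfolding Kz_sq complex_norm_square[symmetric] sq by simp
  finally show ?thesis unfolding Kz_sq by (simp add: algebra_simps)
qed

lemma berezin_T:
  fixes z :: "complex^'n::finite"
  shows "berezin (\<lambda>f z. of_real pi *
             (\<Sum>m\<in>{m :: 'n \<Rightarrow> nat. (\<Sum>i\<in>UNIV. m i) = 1}. E_proj m f z - Phi f z)) z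
    = complex_of_real ((pi\<^sup>2 * (norm z)\<^sup>2 - pi * CARD('n)) * exp (- pi * (norm z)\<^sup>2))"
proof -
  define c where "c j = complex_of_real (sqrt pi) * cnj (z $ j) * Kz z" for j
  have Tk: "of_real pi * (\<Sum>m\<in>{m :: 'n \<Rightarrow> nat. (\<Sum>i\<in>UNIV. m i) = 1}. E_proj m (fock_kernel z) w - Phi (fock_kernel z) w)
     = of_real pi * (\<Sum>j\<in>UNIV. c j * e_mon (dlt j) w - Kz z)" for w
    unfolding sum_unit_mi E_proj_def Phi_def ip_ke ip_k1 c_def ..
  have hb: "has_bochner_integral lborel
     (\<lambda>w. of_real pi * (\<Sum>j\<in>UNIV. c j * (e_mon (dlt j) w * cnj (fock_kernel z w) * complex_of_real (gauss_weight w))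
           - Kz z * cnj (fock_kernel z w) * complex_of_real (gauss_weight w)))
     (of_real pi * (\<Sum>j\<in>UNIV. c j * (complex_of_real (sqrt pi) * z $ j * Kz z) - Kz z * Kz z))"
    by (intro has_bochner_integral_mult_right has_bochner_integral_sum has_bochner_integral_diff hb_ek hb_1k)
  have fe: "(\<lambda>w. of_real pi * (\<Sum>j\<in>UNIV. c j * (e_mon (dlt j) w * cnj (fock_kernel z w) * complex_of_real (gauss_weight w))
           - Kz z * cnj (fock_kernel z w) * complex_of_real (gauss_weight w)))
     = (\<lambda>w. of_real pi * (\<Sum>j\<in>UNIV. c j * e_mon (dlt j) w - Kz z) * cnj (fock_kernel z w) * complex_of_real (gauss_weight w))"
    apply (rule ext)
    apply (simp only: mult.assoc sum_distrib_right)
    apply (intro arg_cong2[where f=times] refl sum.cong)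
    apply (simp add: algebra_simps)
    done
  have "berezin (\<lambda>f z. of_real pi *
             (\<Sum>m\<in>{m :: 'n \<Rightarrow> nat. (\<Sum>i\<in>UNIV. m i) = 1}. E_proj m f z - Phi f z)) z
     = of_real pi * (\<Sum>j\<in>UNIV. c j * (complex_of_real (sqrt pi) * z $ j * Kz z) - Kz z * Kz z)"
    unfolding berezin_def fock_ip_def Tk using hb[unfolded fe] by (rule has_bochner_integral_integral_eq)
  also have "\<dots> = of_real pi * (\<Sum>j\<in>UNIV. complex_of_real ((pi * (cmod (z $ j))\<^sup>2 - 1) * exp (- pi * (norm z)\<^sup>2)))"
    unfolding c_def summand_val ..
  also have "\<dots> = complex_of_real (pi * (\<Sum>j\<in>UNIV. (pi * (cmod (z $ j))\<^sup>2 - 1) * exp (- pi * (norm z)\<^sup>2)))"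
    by simp
  also have "pi * (\<Sum>j\<in>UNIV. (pi * (cmod (z $ j))\<^sup>2 - 1) * exp (- pi * (norm z)\<^sup>2))
      = (pi\<^sup>2 * (norm z)\<^sup>2 - pi * CARD('n)) * exp (- pi * (norm z)\<^sup>2)"
    unfolding norm2_vec
    by (simp add: sum_distrib_left sum_distrib_right sum_subtractf power2_eq_square algebra_simps)
  finally show ?thesis .
qed

lemma dd2_gauss:
  fixes z v :: "complex^'n::finite"
  assumes vv: "v \<bullet> v = 1"
  shows "dd2 (\<lambda>z. complex_of_real (exp (- pi * (norm z)\<^sup>2))) z v
       = complex_of_real ((4 * pi\<^sup>2 * (z \<bullet> v)\<^sup>2 - 2 * pi) * exp (- pi * (norm z)\<^sup>2))"
proof -
  define N where "N = (norm z)\<^sup>2"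
  define a where "a = z \<bullet> v"
  define r where "r s = exp (- pi * (N + 2 * s * a + s\<^sup>2))" for s
  define r' where "r' s = - pi * (2 * a + 2 * s) * r s" for s
  have nn: "(norm (z + s *\<^sub>R v))\<^sup>2 = N + 2 * s * a + s\<^sup>2" for s
    unfolding N_def a_def power2_norm_eq_inner
    by (simp add: inner_add_left inner_add_right inner_commute vv algebra_simps power2_eq_square)
  have e1: "(\<lambda>s. complex_of_real (exp (- pi * (norm (z + s *\<^sub>R v))\<^sup>2))) = (\<lambda>s. complex_of_real (r s))"
    unfolding nn r_def ..
  have dr: "(r has_real_derivative r' t) (at t)" for t
    unfolding r_def r'_def by (auto intro!: derivative_eq_intros simp: algebra_simps)
  have v1: "vector_derivative (\<lambda>s. complex_of_real (r s)) (at t) = complex_of_real (r' t)" for t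
    by (rule vector_derivative_at) (rule has_vector_derivative_of_real[OF dr])
  have dr': "(r' has_real_derivative ((4 * pi\<^sup>2 * a\<^sup>2 - 2 * pi) * exp (- pi * N))) (at 0)"
  proof -
    have "(r' has_real_derivative (- pi * 2 * r 0 + (- pi * (2 * a + 2 * 0)) * r' 0)) (at 0)"
      unfolding r'_def[abs_def] using dr[of 0] unfolding r'_def
      by (auto intro!: derivative_eq_intros)
    moreover have "- pi * 2 * r 0 + (- pi * (2 * a + 2 * 0)) * r' 0 = (4 * pi\<^sup>2 * a\<^sup>2 - 2 * pi) * exp (- pi * N)"
      unfolding r'_def r_def by (simp add: power2_eq_square algebra_simps)
    ultimately show ?thesis by simp
  qed
  have "dd2 (\<lambda>z. complex_of_real (exp (- pi * (norm z)\<^sup>2))) z v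
      = vector_derivative (\<lambda>t. complex_of_real (r' t)) (at 0)"
    unfolding dd2_def e1 v1 ..
  also have "\<dots> = complex_of_real ((4 * pi\<^sup>2 * a\<^sup>2 - 2 * pi) * exp (- pi * N))"
    by (rule vector_derivative_at) (rule has_vector_derivative_of_real[OF dr'])
  finally show ?thesis unfolding a_def N_def .
qed

lemma lap_gauss:
  fixes z :: "complex^'n::finite"
  shows "fock_lap (\<lambda>z. complex_of_real (exp (- pi * (norm z)\<^sup>2))) z
    = complex_of_real ((pi\<^sup>2 * (norm z)\<^sup>2 - pi * CARD('n)) * exp (- pi * (norm z)\<^sup>2))"
proof -
  have v1: "axis i 1 \<bullet> axis i (1::complex) = 1" for i :: 'n by (simp add: inner_axis_axis)
  have vi: "axis i \<i> \<bullet> axis i \<i> = 1" for i :: 'n by (simp add: inner_axis_axis)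
  have "fock_lap (\<lambda>z. complex_of_real (exp (- pi * (norm z)\<^sup>2))) z
     = complex_of_real ((1/4) * (\<Sum>i\<in>UNIV. (4 * pi\<^sup>2 * (Re (z $ i))\<^sup>2 - 2 * pi) * exp (- pi * (norm z)\<^sup>2)
                                + (4 * pi\<^sup>2 * (Im (z $ i))\<^sup>2 - 2 * pi) * exp (- pi * (norm z)\<^sup>2)))"
    unfolding fock_lap_def dd2_gauss[OF v1] dd2_gauss[OF vi] inner_axis by simp
  also have "(1/4) * (\<Sum>i\<in>UNIV. (4 * pi\<^sup>2 * (Re (z $ i))\<^sup>2 - 2 * pi) * exp (- pi * (norm z)\<^sup>2)
                                + (4 * pi\<^sup>2 * (Im (z $ i))\<^sup>2 - 2 * pi) * exp (- pi * (norm z)\<^sup>2))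
     = (pi\<^sup>2 * (norm z)\<^sup>2 - pi * CARD('n)) * exp (- pi * (norm z)\<^sup>2)"
    unfolding norm2_vec cmod_power2
    by (simp add: sum.distrib sum_distrib_left sum_distrib_right sum_subtractf algebra_simps)
  finally show ?thesis .
qed

lemma gw_meas[measurable]: "gauss_weight \<in> borel_measurable lborel"
  unfolding gauss_weight_def by measurable

lemma gw_pos: "0 < gauss_weight w"
  unfolding gauss_weight_def by simp

lemma gw_prod: "gauss_weight (w::complex^'n::finite) = (\<Prod>b\<in>Basis. exp (- pi * (w \<bullet> b)\<^sup>2))"
  unfolding gauss_weight_def norm2_Basis by (simp add: exp_sum[symmetric] sum_distrib_left sum_negf)

lemma gw_integrable: "integrable lborel (gauss_weight :: complex^'n::finite \<Rightarrow> real)"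
proof -
  have "has_bochner_integral lborel (\<lambda>w::complex^'n. \<Prod>b\<in>Basis. exp (- pi * (w \<bullet> b)\<^sup>2))
      (\<Prod>b\<in>(Basis :: (complex^'n) set). integral\<^sup>L lborel (\<lambda>x. exp (- pi * x\<^sup>2)))"
    by (rule lborel_prod_hbi[where h="\<lambda>_ x. exp (- pi * x\<^sup>2)"]) (use integrable_exp_quad[of 0] in simp)
  then show ?thesis unfolding gw_prod[abs_def] by (rule integrable.intros)
qed

lemma normsq_gw_integrable: "integrable lborel (\<lambda>w::complex^'n::finite. (norm w)\<^sup>2 * gauss_weight w)"
proof -
  define h :: "complex^'n \<Rightarrow> complex^'n \<Rightarrow> real \<Rightarrow> real" where
    "h b0 b x = (if b = b0 then x\<^sup>2 else 1) * exp (- pi * x\<^sup>2)" for b0 b x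
  have hi: "integrable lborel (h b0 b)" for b0 b
    unfolding h_def using integrable_exp_quad[of 0] integrable_exp_quad_x2
    by (cases "b = b0") (simp_all add: mult.commute)
  have "integrable lborel (\<lambda>w::complex^'n. \<Prod>b\<in>Basis. h b0 b (w \<bullet> b))" for b0
    by (rule integrable.intros, rule lborel_prod_hbi, rule hi)
  then have "integrable lborel (\<lambda>w::complex^'n. \<Sum>b0\<in>Basis. \<Prod>b\<in>Basis. h b0 b (w \<bullet> b))"
    by (intro Bochner_Integration.integrable_sum)
  then have "integrable lborel (\<lambda>w::complex^'n. \<Sum>b0\<in>Basis. \<Prod>b\<in>Basis. (if b = b0 then (w \<bullet> b)\<^sup>2 else 1) * exp (- pi * (w \<bullet> b)\<^sup>2))"
    unfolding h_def .
  moreover have "(\<lambda>w::complex^'n. \<Sum>b0\<in>Basis. \<Prod>b\<in>Basis. (if b = b0 then (w \<bullet> b)\<^sup>2 else 1) * exp (- pi * (w \<bullet> b)\<^sup>2))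
     = (\<lambda>w. (norm w)\<^sup>2 * gauss_weight w)"
    unfolding gw_prod norm2_Basis prod.distrib sum_distrib_right
    by (simp add: prod.delta[OF finite_Basis] if_distrib cong: if_cong)
  ultimately show ?thesis by simp
qed

lemma fock_ip_self: "fock_ip f f = complex_of_real (\<integral>z. (cmod (f z))\<^sup>2 * gauss_weight z \<partial>lborel)"
proof -
  have "fock_ip f f = (\<integral>z. complex_of_real ((cmod (f z))\<^sup>2 * gauss_weight z) \<partial>lborel)"
    unfolding fock_ip_def by (intro Bochner_Integration.integral_cong refl) (simp add: complex_mult_cnj cmod_power2)
  then show ?thesis by (simp only: integral_complex_of_real)
qed

lemma fock_norm_eq: "fock_norm f = sqrt (\<integral>z. (cmod (f z))\<^sup>2 * gauss_weight z \<partial>lborel)"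
  unfolding fock_norm_def by (simp only: fock_ip_self Re_complex_of_real)

lemma nsq_nonneg: "0 \<le> (\<integral>z. (cmod (f z))\<^sup>2 * gauss_weight z \<partial>lborel)"
  by (intro integral_nonneg_AE AE_I2 mult_nonneg_nonneg) (auto simp: gw_pos less_imp_le)

lemma fock_norm_nonneg: "0 \<le> fock_norm f"
  unfolding fock_norm_eq using nsq_nonneg by simp

lemma fock_norm_sq: "(fock_norm f)\<^sup>2 = (\<integral>z. (cmod (f z))\<^sup>2 * gauss_weight z \<partial>lborel)"
proof -
  have "0 \<le> (\<integral>z. (cmod (f z))\<^sup>2 * gauss_weight z \<partial>lborel)"
    by (intro integral_nonneg_AE AE_I2 mult_nonneg_nonneg) (auto simp: gw_pos less_imp_le)
  then show ?thesis unfolding fock_norm_eq by simp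
qed

lemma const_in_F: "(\<lambda>_. c) \<in> fock_space"
  unfolding fock_space_def entire_cn_def
  by (auto intro!: exI[of _ "\<lambda>_. 0"] has_derivative_const integrable_mult_right gw_integrable)

lemma lin_in_F: "(\<lambda>z::complex^'n::finite. c * z $ j) \<in> fock_space"
proof -
  have bl: "bounded_linear (\<lambda>z::complex^'n. c * z $ j)"
    by (rule bounded_linear_compose[OF bounded_linear_mult_right bounded_linear_vec_nth])
  have ent: "entire_cn (\<lambda>z::complex^'n. c * z $ j)"
    unfolding entire_cn_def
    by (auto intro!: exI[of _ "\<lambda>z. c * z $ j"] bounded_linear_imp_has_derivative[OF bl])
  have cm: "(\<lambda>z::complex^'n. c * z $ j) \<in> borel_measurable borel"
    by (intro borel_measurable_continuous_onI linear_continuous_on bl)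
  then have m: "(\<lambda>z::complex^'n. c * z $ j) \<in> borel_measurable lborel" by simp
  have "integrable lborel (\<lambda>z::complex^'n. (cmod (c * z $ j))\<^sup>2 * gauss_weight z)"
  proof (rule Bochner_Integration.integrable_bound[OF integrable_mult_right[OF normsq_gw_integrable, of "(cmod c)\<^sup>2"]])
    show "(\<lambda>z::complex^'n. (cmod (c * z $ j))\<^sup>2 * gauss_weight z) \<in> borel_measurable lborel"
      using m by measurable
    show "AE z in lborel. norm ((cmod (c * z $ j))\<^sup>2 * gauss_weight z) \<le> norm ((cmod c)\<^sup>2 * ((norm z)\<^sup>2 * gauss_weight z))"
    proof (rule AE_I2)
      fix z :: "complex^'n"
      have "cmod (z $ j) \<le> norm z" by (rule Finite_Cartesian_Product.norm_nth_le)
      then have "(cmod (z $ j))\<^sup>2 \<le> (norm z)\<^sup>2" by (simp add: power_mono)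
      then have "(cmod c)\<^sup>2 * (cmod (z $ j))\<^sup>2 * gauss_weight z \<le> (cmod c)\<^sup>2 * (norm z)\<^sup>2 * gauss_weight z"
        using gw_pos[of z] by (intro mult_right_mono mult_left_mono) auto
      then show "norm ((cmod (c * z $ j))\<^sup>2 * gauss_weight z) \<le> norm ((cmod c)\<^sup>2 * ((norm z)\<^sup>2 * gauss_weight z))"
        using gw_pos[of z] by (simp add: norm_mult power_mult_distrib abs_mult mult_ac)
    qed
  qed
  then show ?thesis using ent m unfolding fock_space_def by simp
qed

lemma e_mon_dlt_in_F: "e_mon (dlt j) \<in> fock_space"
  unfolding e_mon_dlt by (rule lin_in_F)

lemma RL:
  fixes I A B :: real
  assumes I0: "0 \<le> I" and A0: "0 \<le> A" and B0: "0 \<le> B"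
    and h: "\<And>t. t > 0 \<Longrightarrow> 2 * I \<le> t * A + B / t"
  shows "I \<le> sqrt A * sqrt B"
proof (cases "A > 0 \<and> B > 0")
  case True
  define t where "t = sqrt B / sqrt A"
  have tp: "t > 0" using True unfolding t_def by simp
  have sA: "sqrt A * sqrt A = A" using A0 by simp
  have sB: "sqrt B * sqrt B = B" using B0 by simp
  have "t * A = sqrt A * sqrt B" unfolding t_def using True sA[symmetric]
    by (simp add: field_simps)
  moreover have "B / t = sqrt A * sqrt B" unfolding t_def using True sB
    by (simp add: field_simps)
  ultimately show ?thesis using h[OF tp] by simp
next
  case False
  then have z: "A = 0 \<or> B = 0" using A0 B0 by auto
  have "I \<le> 0"
  proof (rule ccontr)
    assume "\<not> I \<le> 0"
    then have Ip: "I > 0" by simp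
    show False
    proof (cases "A = 0")
      case True
      define t where "t = (B + 1) / I"
      have tp: "t > 0" unfolding t_def using Ip B0 by simp
      have "B / t = B * I / (B + 1)" unfolding t_def using Ip B0 by (simp add: field_simps)
      also have "\<dots> < I" using Ip B0 by (simp add: field_simps)
      finally show False using h[OF tp] True Ip by simp
    next
      case False
      with z have B: "B = 0" by simp
      define t where "t = I / (A + 1)"
      have tp: "t > 0" unfolding t_def using Ip A0 by simp
      have "t * A = I * A / (A + 1)" unfolding t_def by simp
      also have "\<dots> < I" using Ip A0 by (simp add: field_simps)
      finally show False using h[OF tp] B Ip by simp
    qed
  qed
  then show ?thesis using z by auto
qed

lemma amgm_t:
  fixes a b t :: real assumes "t > 0"
  shows "2 * (a * b) \<le> t * a\<^sup>2 + b\<^sup>2 / t"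
proof -
  have "0 \<le> (t * a - b)\<^sup>2 / t" using assms by simp
  also have "(t * a - b)\<^sup>2 / t = t * a\<^sup>2 + b\<^sup>2 / t - 2 * (a * b)"
    using assms by (simp add: power2_eq_square field_simps)
  finally show ?thesis by simp
qed

lemma cnj_meas[measurable]: "(cnj :: complex \<Rightarrow> complex) \<in> borel_measurable borel"
  by (intro borel_measurable_continuous_onI continuous_intros)

lemma ofreal_meas[measurable]: "(complex_of_real) \<in> borel_measurable borel"
  by (intro borel_measurable_continuous_onI continuous_intros)

lemma F_meas: "f \<in> fock_space \<Longrightarrow> f \<in> borel_measurable lborel"
  unfolding fock_space_def by simp

lemma F_int: "f \<in> fock_space \<Longrightarrow> integrable lborel (\<lambda>z. (cmod (f z))\<^sup>2 * gauss_weight z)"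
  unfolding fock_space_def by simp

lemma CS:
  assumes f: "f \<in> fock_space" and u: "u \<in> fock_space"
  shows "integrable lborel (\<lambda>z. f z * cnj (u z) * complex_of_real (gauss_weight z))"
    and "cmod (fock_ip f u) \<le> fock_norm f * fock_norm u"
proof -
  note fm[measurable] = F_meas[OF f] and um[measurable] = F_meas[OF u]
  let ?A = "\<integral>z. (cmod (f z))\<^sup>2 * gauss_weight z \<partial>lborel"
  let ?B = "\<integral>z. (cmod (u z))\<^sup>2 * gauss_weight z \<partial>lborel"
  let ?g = "\<lambda>z. cmod (f z) * cmod (u z) * gauss_weight z"
  have ab: "a * b \<le> a\<^sup>2 + b\<^sup>2" for a b :: real
    using amgm_t[of 1 a b] by (simp add: power2_eq_square) (smt (verit) zero_le_square)
  have gi: "integrable lborel ?g"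
  proof (rule Bochner_Integration.integrable_bound[OF Bochner_Integration.integrable_add[OF F_int[OF f] F_int[OF u]]])
    show "?g \<in> borel_measurable lborel" by measurable
    show "AE z in lborel. norm (?g z) \<le> norm ((cmod (f z))\<^sup>2 * gauss_weight z + (cmod (u z))\<^sup>2 * gauss_weight z)"
    proof (rule AE_I2)
      fix z
      have "cmod (f z) * cmod (u z) * gauss_weight z \<le> ((cmod (f z))\<^sup>2 + (cmod (u z))\<^sup>2) * gauss_weight z"
        using gw_pos[of z] ab by (intro mult_right_mono) auto
      then show "norm (?g z) \<le> norm ((cmod (f z))\<^sup>2 * gauss_weight z + (cmod (u z))\<^sup>2 * gauss_weight z)"
        using gw_pos[of z] by (simp add: algebra_simps)
    qed
  qed
  show ci: "integrable lborel (\<lambda>z. f z * cnj (u z) * complex_of_real (gauss_weight z))"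
  proof (rule Bochner_Integration.integrable_bound[OF gi])
    show "(\<lambda>z. f z * cnj (u z) * complex_of_real (gauss_weight z)) \<in> borel_measurable lborel" by measurable
    show "AE z in lborel. norm (f z * cnj (u z) * complex_of_real (gauss_weight z)) \<le> norm (?g z)"
      using gw_pos by (auto simp: norm_mult)
  qed
  have "cmod (fock_ip f u) \<le> integral\<^sup>L lborel ?g"
    unfolding fock_ip_def
    by (rule Bochner_Integration.integral_norm_bound_integral[OF ci gi]) (simp add: norm_mult gw_pos less_imp_le)
  also have "\<dots> \<le> sqrt ?A * sqrt ?B"
  proof (rule RL)
    show "0 \<le> integral\<^sup>L lborel ?g" by (intro integral_nonneg_AE AE_I2) (simp add: gw_pos less_imp_le)
    show "0 \<le> ?A" "0 \<le> ?B" by (rule nsq_nonneg)+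
    fix t :: real assume tp: "t > 0"
    have "integral\<^sup>L lborel (\<lambda>z. 2 * ?g z) \<le>
       integral\<^sup>L lborel (\<lambda>z. t * ((cmod (f z))\<^sup>2 * gauss_weight z) + (1 / t) * ((cmod (u z))\<^sup>2 * gauss_weight z))"
    proof (rule integral_mono)
      show "integrable lborel (\<lambda>z. 2 * ?g z)" using gi by simp
      show "integrable lborel (\<lambda>z. t * ((cmod (f z))\<^sup>2 * gauss_weight z) + (1 / t) * ((cmod (u z))\<^sup>2 * gauss_weight z))"
        using F_int[OF f] F_int[OF u] by simp
      fix z
      have "2 * (cmod (f z) * cmod (u z)) \<le> t * (cmod (f z))\<^sup>2 + (cmod (u z))\<^sup>2 / t" by (rule amgm_t[OF tp])
      then have "2 * (cmod (f z) * cmod (u z)) * gauss_weight z \<le> (t * (cmod (f z))\<^sup>2 + (cmod (u z))\<^sup>2 / t) * gauss_weight z"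
        using gw_pos[of z] by (intro mult_right_mono) auto
      then show "2 * ?g z \<le> t * ((cmod (f z))\<^sup>2 * gauss_weight z) + (1 / t) * ((cmod (u z))\<^sup>2 * gauss_weight z)"
        by (simp add: algebra_simps)
    qed
    then show "2 * integral\<^sup>L lborel ?g \<le> t * ?A + ?B / t"
      using F_int[OF f] F_int[OF u] gi by simp
  qed
  finally show "cmod (fock_ip f u) \<le> fock_norm f * fock_norm u" unfolding fock_norm_eq .
qed

lemma ip_lin:
  assumes f: "f \<in> fock_space" and g: "g \<in> fock_space" and u: "u \<in> fock_space"
  shows "fock_ip (\<lambda>z. a * f z + b * g z) u = a * fock_ip f u + b * fock_ip g u"
proof -
  have "fock_ip (\<lambda>z. a * f z + b * g z) u =
     (\<integral>z. a * (f z * cnj (u z) * complex_of_real (gauss_weight z)) + b * (g z * cnj (u z) * complex_of_real (gauss_weight z)) \<partial>lborel)"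
    unfolding fock_ip_def by (intro Bochner_Integration.integral_cong refl) (simp add: algebra_simps)
  also have "\<dots> = a * fock_ip f u + b * fock_ip g u"
    unfolding fock_ip_def using CS(1)[OF f u] CS(1)[OF g u] by simp
  finally show ?thesis .
qed

lemma sq_tri: "(cmod (a * x + b * y))\<^sup>2 \<le> 2 * (cmod a)\<^sup>2 * (cmod x)\<^sup>2 + 2 * (cmod b)\<^sup>2 * (cmod y)\<^sup>2"
proof -
  have "cmod (a * x + b * y) \<le> cmod a * cmod x + cmod b * cmod y"
    using norm_triangle_ineq[of "a * x" "b * y"] by (simp add: norm_mult)
  then have "(cmod (a * x + b * y))\<^sup>2 \<le> (cmod a * cmod x + cmod b * cmod y)\<^sup>2"
    by (rule power_mono) simp
  also have "\<dots> \<le> 2 * (cmod a)\<^sup>2 * (cmod x)\<^sup>2 + 2 * (cmod b)\<^sup>2 * (cmod y)\<^sup>2"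
    using amgm_t[of 1 "cmod a * cmod x" "cmod b * cmod y"]
    by (simp add: power2_eq_square algebra_simps)
  finally show ?thesis .
qed

lemma lincomb_int:
  assumes f: "f \<in> fock_space" and g: "g \<in> fock_space"
  shows "integrable lborel (\<lambda>z. (cmod (a * f z + b * g z))\<^sup>2 * gauss_weight z)"
    and "integral\<^sup>L lborel (\<lambda>z. (cmod (a * f z + b * g z))\<^sup>2 * gauss_weight z)
        \<le> 2 * (cmod a)\<^sup>2 * (fock_norm f)\<^sup>2 + 2 * (cmod b)\<^sup>2 * (fock_norm g)\<^sup>2"
proof -
  note fm[measurable] = F_meas[OF f] and gm[measurable] = F_meas[OF g]
  have R: "integrable lborel (\<lambda>z. 2 * (cmod a)\<^sup>2 * ((cmod (f z))\<^sup>2 * gauss_weight z) + 2 * (cmod b)\<^sup>2 * ((cmod (g z))\<^sup>2 * gauss_weight z))"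
    using F_int[OF f] F_int[OF g] by simp
  have pw: "(cmod (a * f z + b * g z))\<^sup>2 * gauss_weight z \<le>
     2 * (cmod a)\<^sup>2 * ((cmod (f z))\<^sup>2 * gauss_weight z) + 2 * (cmod b)\<^sup>2 * ((cmod (g z))\<^sup>2 * gauss_weight z)" for z
  proof -
    have "(cmod (a * f z + b * g z))\<^sup>2 * gauss_weight z \<le> (2 * (cmod a)\<^sup>2 * (cmod (f z))\<^sup>2 + 2 * (cmod b)\<^sup>2 * (cmod (g z))\<^sup>2) * gauss_weight z"
      using gw_pos[of z] sq_tri by (intro mult_right_mono) auto
    then show ?thesis by (simp add: algebra_simps)
  qed
  show I: "integrable lborel (\<lambda>z. (cmod (a * f z + b * g z))\<^sup>2 * gauss_weight z)"
  proof (rule Bochner_Integration.integrable_bound[OF R])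
    show "(\<lambda>z. (cmod (a * f z + b * g z))\<^sup>2 * gauss_weight z) \<in> borel_measurable lborel" by measurable
    show "AE z in lborel. norm ((cmod (a * f z + b * g z))\<^sup>2 * gauss_weight z) \<le>
       norm (2 * (cmod a)\<^sup>2 * ((cmod (f z))\<^sup>2 * gauss_weight z) + 2 * (cmod b)\<^sup>2 * ((cmod (g z))\<^sup>2 * gauss_weight z))"
    proof (rule AE_I2)
      fix z
      have l0: "0 \<le> (cmod (a * f z + b * g z))\<^sup>2 * gauss_weight z" using gw_pos[of z] by simp
      then have "norm ((cmod (a * f z + b * g z))\<^sup>2 * gauss_weight z) = (cmod (a * f z + b * g z))\<^sup>2 * gauss_weight z"
        by simp
      moreover have "2 * (cmod a)\<^sup>2 * ((cmod (f z))\<^sup>2 * gauss_weight z) + 2 * (cmod b)\<^sup>2 * ((cmod (g z))\<^sup>2 * gauss_weight z)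
        \<le> norm (2 * (cmod a)\<^sup>2 * ((cmod (f z))\<^sup>2 * gauss_weight z) + 2 * (cmod b)\<^sup>2 * ((cmod (g z))\<^sup>2 * gauss_weight z))"
        by simp
      ultimately show "norm ((cmod (a * f z + b * g z))\<^sup>2 * gauss_weight z) \<le>
       norm (2 * (cmod a)\<^sup>2 * ((cmod (f z))\<^sup>2 * gauss_weight z) + 2 * (cmod b)\<^sup>2 * ((cmod (g z))\<^sup>2 * gauss_weight z))"
        using pw[of z] by linarith
    qed
  qed
  have "integral\<^sup>L lborel (\<lambda>z. (cmod (a * f z + b * g z))\<^sup>2 * gauss_weight z) \<le>
      integral\<^sup>L lborel (\<lambda>z. 2 * (cmod a)\<^sup>2 * ((cmod (f z))\<^sup>2 * gauss_weight z) + 2 * (cmod b)\<^sup>2 * ((cmod (g z))\<^sup>2 * gauss_weight z))"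
    by (rule integral_mono[OF I R pw])
  also have "\<dots> = 2 * (cmod a)\<^sup>2 * (fock_norm f)\<^sup>2 + 2 * (cmod b)\<^sup>2 * (fock_norm g)\<^sup>2"
    unfolding fock_norm_sq using F_int[OF f] F_int[OF g] by simp
  finally show "integral\<^sup>L lborel (\<lambda>z. (cmod (a * f z + b * g z))\<^sup>2 * gauss_weight z)
        \<le> 2 * (cmod a)\<^sup>2 * (fock_norm f)\<^sup>2 + 2 * (cmod b)\<^sup>2 * (fock_norm g)\<^sup>2" .
qed

lemma lincomb_in_F:
  assumes f: "f \<in> fock_space" and g: "g \<in> fock_space"
  shows "(\<lambda>z. a * f z + b * g z) \<in> fock_space"
proof -
  note fm[measurable] = F_meas[OF f] and gm[measurable] = F_meas[OF g]
  have ent: "entire_cn (\<lambda>z. a * f z + b * g z)"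
    unfolding entire_cn_def
  proof
    fix z
    obtain D1 where D1: "(f has_derivative D1) (at z)" "\<forall>(c::complex) v. D1 (\<chi> i. c * v $ i) = c * D1 v"
      using f unfolding fock_space_def entire_cn_def by blast
    obtain D2 where D2: "(g has_derivative D2) (at z)" "\<forall>(c::complex) v. D2 (\<chi> i. c * v $ i) = c * D2 v"
      using g unfolding fock_space_def entire_cn_def by blast
    have "((\<lambda>z. a * f z + b * g z) has_derivative (\<lambda>v. a * D1 v + b * D2 v)) (at z)"
      by (intro has_derivative_add has_derivative_mult_right D1(1) D2(1))
    moreover have "\<forall>(c::complex) v. a * D1 (\<chi> i. c * v $ i) + b * D2 (\<chi> i. c * v $ i) = c * (a * D1 v + b * D2 v)"
      using D1(2) D2(2) by (simp add: algebra_simps)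
    ultimately show "\<exists>D. ((\<lambda>z. a * f z + b * g z) has_derivative D) (at z) \<and>
        (\<forall>(c::complex) v. D (\<chi> i. c * v $ i) = c * D v)" by blast
  qed
  have "(\<lambda>z. a * f z + b * g z) \<in> borel_measurable lborel" by measurable
  then show ?thesis using ent lincomb_int(1)[OF f g] unfolding fock_space_def by simp
qed

lemma fock_norm_lincomb:
  assumes f: "f \<in> fock_space" and g: "g \<in> fock_space"
  shows "(fock_norm (\<lambda>z. a * f z + b * g z))\<^sup>2 \<le> 2 * (cmod a)\<^sup>2 * (fock_norm f)\<^sup>2 + 2 * (cmod b)\<^sup>2 * (fock_norm g)\<^sup>2"
  unfolding fock_norm_sq[of "\<lambda>z. a * f z + b * g z"] using lincomb_int(2)[OF f g] .

lemma fock_norm_scale: "fock_norm (\<lambda>z. c * f z) = cmod c * fock_norm f"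
proof -
  have "(\<integral>z. (cmod (c * f z))\<^sup>2 * gauss_weight z \<partial>lborel) = (cmod c)\<^sup>2 * (\<integral>z. (cmod (f z))\<^sup>2 * gauss_weight z \<partial>lborel)"
    by (simp add: norm_mult power_mult_distrib mult.assoc)
  then show ?thesis unfolding fock_norm_eq by (simp add: real_sqrt_mult)
qed

lemma fock_norm_zero: "fock_norm (\<lambda>z. 0) = 0"
  unfolding fock_norm_eq by simp

lemma sq_bound:
  fixes n C x :: real
  assumes "0 \<le> n" "n \<le> C * x"
  shows "n\<^sup>2 \<le> C\<^sup>2 * x\<^sup>2"
proof -
  have "n\<^sup>2 \<le> (C * x)\<^sup>2" using assms by (intro power_mono) auto
  then show ?thesis by (simp add: power_mult_distrib)
qed

lemma bounded_zero: "fock_bounded (\<lambda>f z. 0)"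
  unfolding fock_bounded_def using const_in_F[of 0]
  by (auto simp: fock_norm_zero intro!: exI[of _ 0] fock_norm_nonneg)

lemma bounded_lincomb:
  fixes S1 S2 :: "'n::finite fun_cn \<Rightarrow> 'n fun_cn"
  assumes S1: "fock_bounded S1" and S2: "fock_bounded S2"
  shows "fock_bounded (\<lambda>f z. a * S1 f z + b * S2 f z)"
proof -
  obtain C1 where C1: "\<forall>f\<in>fock_space. fock_norm (S1 f) \<le> C1 * fock_norm f" using S1 unfolding fock_bounded_def by blast
  obtain C2 where C2: "\<forall>f\<in>fock_space. fock_norm (S2 f) \<le> C2 * fock_norm f" using S2 unfolding fock_bounded_def by blast
  have S1F: "S1 f \<in> fock_space" if "f \<in> fock_space" for f using S1 that unfolding fock_bounded_def by blast
  have S2F: "S2 f \<in> fock_space" if "f \<in> fock_space" for f using S2 that unfolding fock_bounded_def by blast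
  have S1L: "S1 (\<lambda>z. \<alpha> * f z + \<beta> * g z) = (\<lambda>z. \<alpha> * S1 f z + \<beta> * S1 g z)" if "f \<in> fock_space" "g \<in> fock_space" for f g \<alpha> \<beta>
    using S1 that unfolding fock_bounded_def by blast
  have S2L: "S2 (\<lambda>z. \<alpha> * f z + \<beta> * g z) = (\<lambda>z. \<alpha> * S2 f z + \<beta> * S2 g z)" if "f \<in> fock_space" "g \<in> fock_space" for f g \<alpha> \<beta>
    using S2 that unfolding fock_bounded_def by blast
  define K where "K = 2 * (cmod a)\<^sup>2 * C1\<^sup>2 + 2 * (cmod b)\<^sup>2 * C2\<^sup>2"
  have bnd: "fock_norm (\<lambda>z. a * S1 f z + b * S2 f z) \<le> sqrt K * fock_norm f" if f: "f \<in> fock_space" for f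
  proof -
    have n1: "(fock_norm (S1 f))\<^sup>2 \<le> C1\<^sup>2 * (fock_norm f)\<^sup>2"
      using C1 f fock_norm_nonneg by (intro sq_bound) auto
    have n2: "(fock_norm (S2 f))\<^sup>2 \<le> C2\<^sup>2 * (fock_norm f)\<^sup>2"
      using C2 f fock_norm_nonneg by (intro sq_bound) auto
    have "(fock_norm (\<lambda>z. a * S1 f z + b * S2 f z))\<^sup>2 \<le> 2 * (cmod a)\<^sup>2 * (fock_norm (S1 f))\<^sup>2 + 2 * (cmod b)\<^sup>2 * (fock_norm (S2 f))\<^sup>2"
      by (rule fock_norm_lincomb[OF S1F[OF f] S2F[OF f]])
    also have "\<dots> \<le> 2 * (cmod a)\<^sup>2 * (C1\<^sup>2 * (fock_norm f)\<^sup>2) + 2 * (cmod b)\<^sup>2 * (C2\<^sup>2 * (fock_norm f)\<^sup>2)"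
      using n1 n2 by (intro add_mono mult_left_mono) auto
    also have "\<dots> = K * (fock_norm f)\<^sup>2" unfolding K_def by (simp add: algebra_simps)
    finally have "sqrt ((fock_norm (\<lambda>z. a * S1 f z + b * S2 f z))\<^sup>2) \<le> sqrt (K * (fock_norm f)\<^sup>2)"
      by (rule real_sqrt_le_mono)
    then show ?thesis by (simp add: real_sqrt_mult abs_of_nonneg fock_norm_nonneg)
  qed
  show ?thesis
    unfolding fock_bounded_def
  proof (intro conjI ballI allI exI)
    fix f :: "'n fun_cn" assume f: "f \<in> fock_space"
    show "(\<lambda>z. a * S1 f z + b * S2 f z) \<in> fock_space" by (rule lincomb_in_F[OF S1F[OF f] S2F[OF f]])
    show "fock_norm (\<lambda>z. a * S1 f z + b * S2 f z) \<le> sqrt K * fock_norm f" by (rule bnd[OF f])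
  next
    fix f g :: "'n fun_cn" and \<alpha> \<beta> :: complex assume f: "f \<in> fock_space" and g: "g \<in> fock_space"
    show "(\<lambda>z. a * S1 (\<lambda>z. \<alpha> * f z + \<beta> * g z) z + b * S2 (\<lambda>z. \<alpha> * f z + \<beta> * g z) z) =
       (\<lambda>z. \<alpha> * (a * S1 f z + b * S2 f z) + \<beta> * (a * S1 g z + b * S2 g z))"
      unfolding S1L[OF f g] S2L[OF f g] by (simp add: algebra_simps)
  qed
qed

lemma bounded_rank1:
  fixes u v :: "'n::finite fun_cn"
  assumes u: "u \<in> fock_space" and v: "v \<in> fock_space"
  shows "fock_bounded (\<lambda>f z. fock_ip f u * v z)"
  unfolding fock_bounded_def
proof (intro conjI ballI allI exI)
  fix f :: "'n fun_cn" assume f: "f \<in> fock_space"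
  have "(\<lambda>z. fock_ip f u * v z + 0 * v z) \<in> fock_space" by (rule lincomb_in_F[OF v v])
  then show "(\<lambda>z. fock_ip f u * v z) \<in> fock_space" by simp
  have "fock_norm (\<lambda>z. fock_ip f u * v z) = cmod (fock_ip f u) * fock_norm v" by (rule fock_norm_scale)
  also have "\<dots> \<le> (fock_norm f * fock_norm u) * fock_norm v"
    using CS(2)[OF f u] fock_norm_nonneg by (intro mult_right_mono) auto
  finally show "fock_norm (\<lambda>z. fock_ip f u * v z) \<le> (fock_norm u * fock_norm v) * fock_norm f"
    by (simp add: mult_ac)
next
  fix f g :: "'n fun_cn" and \<alpha> \<beta> :: complex assume f: "f \<in> fock_space" and g: "g \<in> fock_space"
  show "(\<lambda>z. fock_ip (\<lambda>z. \<alpha> * f z + \<beta> * g z) u * v z) = (\<lambda>z. \<alpha> * (fock_ip f u * v z) + \<beta> * (fock_ip g u * v z))"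
    unfolding ip_lin[OF f g u] by (simp add: algebra_simps)
qed

lemma bounded_sum:
  assumes "finite M" and "\<And>m. m \<in> M \<Longrightarrow> fock_bounded (S m)"
  shows "fock_bounded (\<lambda>f z. \<Sum>m\<in>M. S m f z)"
  using assms
proof (induction M rule: finite_induct)
  case empty
  then show ?case using bounded_zero by simp
next
  case (insert x M)
  have "fock_bounded (\<lambda>f z. 1 * S x f z + 1 * (\<Sum>m\<in>M. S m f z))"
    using insert by (intro bounded_lincomb) auto
  then show ?case using insert by simp
qed

lemma rank_zero: "fock_rank_le (\<lambda>f z. 0) 0"
  unfolding fock_rank_le_def by simp

lemma rank_rank1: "fock_rank_le (\<lambda>f z. fock_ip f u * v z) (1::nat)"
  unfolding fock_rank_le_def
  by (rule exI[of _ "\<lambda>_. v"]) (auto intro!: exI[of _ "\<lambda>_. fock_ip f u" for f])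

lemma sum_split_lt: "(\<Sum>j<(k1::nat) + k2. h j) = (\<Sum>j<k1. h j) + (\<Sum>j<k2. h (j + k1))"
proof -
  have "(\<Sum>j<k1 + k2. h j) = (\<Sum>j\<in>{0..<k1}. h j) + (\<Sum>j\<in>{k1..<k1 + k2}. h j)"
    unfolding lessThan_atLeast0 by (rule sum.atLeastLessThan_concat[symmetric]) auto
  also have "(\<Sum>j\<in>{k1..<k1 + k2}. h j) = (\<Sum>j\<in>{0..<k2}. h (j + k1))"
    using sum.shift_bounds_nat_ivl[of h 0 k1 k2] by (simp add: add.commute)
  finally show ?thesis unfolding lessThan_atLeast0 .
qed

lemma rank_lincomb:
  fixes S1 S2 :: "'n::finite fun_cn \<Rightarrow> 'n fun_cn"
  assumes R1: "fock_rank_le S1 k1" and R2: "fock_rank_le S2 k2"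
  shows "fock_rank_le (\<lambda>f z. a * S1 f z + b * S2 f z) (k1 + k2)"
proof -
  obtain g1 where g1: "\<forall>f\<in>fock_space. \<exists>c. S1 f = (\<lambda>z. \<Sum>j<k1. c j * g1 j z)" using R1 unfolding fock_rank_le_def by blast
  obtain g2 where g2: "\<forall>f\<in>fock_space. \<exists>c. S2 f = (\<lambda>z. \<Sum>j<k2. c j * g2 j z)" using R2 unfolding fock_rank_le_def by blast
  define g where "g j = (if j < k1 then g1 j else g2 (j - k1))" for j
  show ?thesis unfolding fock_rank_le_def
  proof (rule exI[of _ g], intro ballI)
    fix f :: "'n fun_cn" assume f: "f \<in> fock_space"
    obtain c1 where c1: "S1 f = (\<lambda>z. \<Sum>j<k1. c1 j * g1 j z)" using g1 f by blast
    obtain c2 where c2: "S2 f = (\<lambda>z. \<Sum>j<k2. c2 j * g2 j z)" using g2 f by blast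
    define c where "c j = (if j < k1 then a * c1 j else b * c2 (j - k1))" for j
    have "(\<lambda>z. a * S1 f z + b * S2 f z) = (\<lambda>z. \<Sum>j<k1 + k2. c j * g j z)"
      unfolding c1 c2 sum_split_lt c_def g_def
      by (simp add: sum_distrib_left mult.assoc)
    then show "\<exists>c. (\<lambda>z. a * S1 f z + b * S2 f z) = (\<lambda>z. \<Sum>j<k1 + k2. c j * g j z)" by blast
  qed
qed

lemma rank_mono:
  fixes S :: "'n::finite fun_cn \<Rightarrow> 'n fun_cn"
  assumes R: "fock_rank_le S k" and kk: "k \<le> k'"
  shows "fock_rank_le S k'"
proof -
  obtain g where g: "\<forall>f\<in>fock_space. \<exists>c. S f = (\<lambda>z. \<Sum>j<k. c j * g j z)" using R unfolding fock_rank_le_def by blast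
  show ?thesis unfolding fock_rank_le_def
  proof (rule exI[of _ g], intro ballI)
    fix f :: "'n fun_cn" assume f: "f \<in> fock_space"
    obtain c where c: "S f = (\<lambda>z. \<Sum>j<k. c j * g j z)" using g f by blast
    have "(\<lambda>z. \<Sum>j<k'. (if j < k then c j else 0) * g j z) = (\<lambda>z. \<Sum>j<k. c j * g j z)"
    proof
      fix z
      have "(\<Sum>j<k'. (if j < k then c j else 0) * g j z) = (\<Sum>j<k. (if j < k then c j else 0) * g j z)"
        using kk by (intro sum.mono_neutral_right) auto
      then show "(\<Sum>j<k'. (if j < k then c j else 0) * g j z) = (\<Sum>j<k. c j * g j z)" by simp
    qed
    then show "\<exists>c. S f = (\<lambda>z. \<Sum>j<k'. c j * g j z)" using c by metis
  qed
qed

lemma rank_sum: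
  assumes "finite M" and "\<And>m. m \<in> M \<Longrightarrow> \<exists>k. fock_rank_le (S m) k"
  shows "\<exists>k. fock_rank_le (\<lambda>f z. \<Sum>m\<in>M. S m f z) k"
  using assms
proof (induction M rule: finite_induct)
  case empty
  then show ?case using rank_zero by auto
next
  case (insert x M)
  obtain k1 where k1: "fock_rank_le (S x) k1" using insert by blast
  obtain k2 where k2: "fock_rank_le (\<lambda>f z. \<Sum>m\<in>M. S m f z) k2" using insert by blast
  have "fock_rank_le (\<lambda>f z. 1 * S x f z + 1 * (\<Sum>m\<in>M. S m f z)) (k1 + k2)"
    by (rule rank_lincomb[OF k1 k2])
  then show ?case using insert by auto
qed

lemma opnorm_nonneg:
  fixes S :: "'n::finite fun_cn \<Rightarrow> 'n fun_cn"
  assumes S: "fock_bounded S"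
  shows "0 \<le> fock_opnorm S"
proof -
  obtain C where C: "\<forall>f\<in>fock_space. fock_norm (S f) \<le> C * fock_norm f" using S unfolding fock_bounded_def by blast
  define Y where "Y = {fock_norm (S f) | f. f \<in> (fock_space :: 'n fun_cn set) \<and> fock_norm f \<le> 1}"
  have z: "(\<lambda>_. 0) \<in> (fock_space :: 'n fun_cn set)" by (rule const_in_F)
  have inY: "fock_norm (S (\<lambda>_. 0)) \<in> Y" unfolding Y_def
    by (rule CollectI, rule exI[of _ "\<lambda>_. 0"]) (simp add: z fock_norm_zero)
  have bdd: "bdd_above Y"
  proof (rule bdd_aboveI)
    fix y assume "y \<in> Y"
    then obtain f where f: "f \<in> fock_space" "fock_norm f \<le> 1" and y: "y = fock_norm (S f)" unfolding Y_def by blast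
    have "y \<le> C * fock_norm f" using C f y by blast
    also have "\<dots> \<le> \<bar>C\<bar> * fock_norm f" using fock_norm_nonneg[of f] by (intro mult_right_mono) auto
    also have "\<dots> \<le> \<bar>C\<bar> * 1" using f(2) by (intro mult_left_mono) auto
    finally show "y \<le> \<bar>C\<bar>" by simp
  qed
  have "fock_norm (S (\<lambda>_. 0)) \<le> Sup Y" by (rule cSup_upper[OF inY bdd])
  then show ?thesis unfolding fock_opnorm_def Y_def[symmetric] using fock_norm_nonneg[of "S (\<lambda>_. 0)"] by linarith
qed

lemma opnorm_zero: "fock_opnorm (\<lambda>(f :: 'n::finite fun_cn) z. 0) = 0"
proof -
  have z: "(\<lambda>_. 0) \<in> (fock_space :: 'n fun_cn set)" by (rule const_in_F)
  have S0: "{fock_norm ((\<lambda>(f :: 'n fun_cn) z. 0) f) | f. f \<in> (fock_space :: 'n fun_cn set) \<and> fock_norm f \<le> 1} = {0}"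
  proof (intro equalityI subsetI)
    fix x assume "x \<in> {fock_norm ((\<lambda>(f :: 'n fun_cn) z. 0) f) | f. f \<in> (fock_space :: 'n fun_cn set) \<and> fock_norm f \<le> 1}"
    then show "x \<in> {0}" by (auto simp: fock_norm_zero)
  next
    fix x :: real assume "x \<in> {0}"
    then have "x = fock_norm ((\<lambda>(f :: 'n fun_cn) z. 0) (\<lambda>_. 0)) \<and> (\<lambda>_. 0) \<in> (fock_space :: 'n fun_cn set) \<and> fock_norm ((\<lambda>_. 0) :: 'n fun_cn) \<le> 1"
      using z by (simp add: fock_norm_zero)
    then show "x \<in> {fock_norm ((\<lambda>(f :: 'n fun_cn) z. 0) f) | f. f \<in> (fock_space :: 'n fun_cn set) \<and> fock_norm f \<le> 1}"
      by blast
  qed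
  show ?thesis unfolding fock_opnorm_def S0 by simp
qed

theorem proposition3p4:
  fixes T :: "'n::finite fun_cn \<Rightarrow> 'n fun_cn"
  defines "T \<equiv> (\<lambda>f z. of_real pi *
             (\<Sum>m\<in>{m :: 'n \<Rightarrow> nat. (\<Sum>i\<in>UNIV. m i) = 1}. E_proj m f z - Phi f z))"
  shows "(Phi :: 'n fun_cn \<Rightarrow> 'n fun_cn) \<in> W2 1
         \<and> T \<in> fock_schatten 1
         \<and> fock_lap (berezin (Phi :: 'n fun_cn \<Rightarrow> 'n fun_cn)) = berezin T"
proof -
  define M where "M = {m :: 'n \<Rightarrow> nat. (\<Sum>i\<in>UNIV. m i) = 1}"
  have finM: "finite M" unfolding M_def unit_mi by simp
  have eF: "e_mon m \<in> fock_space" if "m \<in> M" for m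
    using that unfolding M_def unit_mi using e_mon_dlt_in_F by blast
  have oneF: "(\<lambda>_. 1) \<in> (fock_space :: 'n fun_cn set)" by (rule const_in_F)
  have Phi_eq: "(Phi :: 'n fun_cn \<Rightarrow> 'n fun_cn) = (\<lambda>f z. fock_ip f (\<lambda>_. 1) * (\<lambda>_. 1) z)"
    by (simp add: Phi_def fun_eq_iff)
  have E_eq: "E_proj m = (\<lambda>f z. fock_ip f (e_mon m) * e_mon m z)" for m :: "'n \<Rightarrow> nat"
    by (simp add: E_proj_def fun_eq_iff)
  have bPhi: "fock_bounded (Phi :: 'n fun_cn \<Rightarrow> 'n fun_cn)"
    unfolding Phi_eq by (rule bounded_rank1[OF oneF oneF])
  have rPhi: "fock_rank_le (Phi :: 'n fun_cn \<Rightarrow> 'n fun_cn) 1"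
    unfolding Phi_eq by (rule rank_rank1)
  have bD: "fock_bounded (\<lambda>f z. E_proj m f z - Phi f z)" if "m \<in> M" for m
  proof -
    have "fock_bounded (\<lambda>f z. 1 * E_proj m f z + (-1) * Phi f z)"
      by (intro bounded_lincomb bPhi) (unfold E_eq, rule bounded_rank1[OF eF[OF that] eF[OF that]])
    then show ?thesis by simp
  qed
  have rD: "\<exists>k. fock_rank_le (\<lambda>f z. E_proj m f z - Phi f z) k" for m :: "'n \<Rightarrow> nat"
  proof -
    have r1: "fock_rank_le (E_proj m) 1" unfolding E_eq by (rule rank_rank1)
    have "fock_rank_le (\<lambda>f z. 1 * E_proj m f z + (-1) * Phi f z) (1 + 1)"
      by (rule rank_lincomb[OF r1 rPhi])
    then show ?thesis by auto
  qed
  have bS: "fock_bounded (\<lambda>f z. \<Sum>m\<in>M. E_proj m f z - Phi f z)"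
    by (rule bounded_sum[OF finM bD])
  obtain K0 where rS: "fock_rank_le (\<lambda>f z. \<Sum>m\<in>M. E_proj m f z - Phi f z) K0"
    using rank_sum[of M "\<lambda>m f z. E_proj m f z - Phi f z"] finM rD by blast
  have Teq: "T = (\<lambda>f z. of_real pi * (\<Sum>m\<in>M. E_proj m f z - Phi f z) + 0 * (\<Sum>m\<in>M. E_proj m f z - Phi f z))"
    unfolding T_def M_def by simp
  have bT: "fock_bounded T" unfolding Teq by (rule bounded_lincomb[OF bS bS])
  have rT: "fock_rank_le T (K0 + K0)" unfolding Teq by (rule rank_lincomb[OF rS rS])
  have sv0: "fock_sv T k = 0" if k: "K0 + K0 \<le> k" for k
  proof -
    have rk: "fock_rank_le T k" by (rule rank_mono[OF rT k])
    show ?thesis unfolding fock_sv_def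
    proof (rule cInf_eq_minimum)
      have "fock_opnorm (\<lambda>f z. T f z - T f z) = 0" using opnorm_zero by simp
      then show "0 \<in> {fock_opnorm (\<lambda>f z. T f z - R f z) |R. fock_bounded R \<and> fock_rank_le R k}"
        using bT rk by force
    next
      fix x assume "x \<in> {fock_opnorm (\<lambda>f z. T f z - R f z) |R. fock_bounded R \<and> fock_rank_le R k}"
      then obtain R where R: "fock_bounded R" and x: "x = fock_opnorm (\<lambda>f z. T f z - R f z)" by blast
      have "fock_bounded (\<lambda>f z. 1 * T f z + (-1) * R f z)" by (rule bounded_lincomb[OF bT R])
      then have "fock_bounded (\<lambda>f z. T f z - R f z)" by simp
      then show "0 \<le> x" unfolding x by (rule opnorm_nonneg)
    qed
  qed
  have summ: "summable (\<lambda>k. fock_sv T k powr 1)"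
    by (rule summable_finite[of "{..<K0 + K0}"]) (auto simp: sv0)
  have TS: "T \<in> fock_schatten 1" unfolding fock_schatten_def using bT summ by simp
  have bPhi_eq: "berezin (Phi :: 'n fun_cn \<Rightarrow> 'n fun_cn) = (\<lambda>z. complex_of_real (exp (- pi * (norm z)\<^sup>2)))"
    by (rule ext) (rule berezin_Phi)
  have lap: "fock_lap (berezin (Phi :: 'n fun_cn \<Rightarrow> 'n fun_cn)) = berezin T"
  proof (rule ext)
    fix z :: "complex^'n"
    show "fock_lap (berezin Phi) z = berezin T z"
      unfolding bPhi_eq lap_gauss T_def berezin_T ..
  qed
  have W: "(Phi :: 'n fun_cn \<Rightarrow> 'n fun_cn) \<in> W2 1"
    unfolding W2_def using bPhi TS lap by blast
  show ?thesis using W TS lap by blast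
qed

end
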